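(* For $b\in\mathbb R$ let $\mathfrak g_b$ be the 4-dimensional Lie algebra with basis $\{f_1,f_2,u,v\}$ whose only nonzero brackets are $[f_1,f_2]=f_2$, $[f_1,u]=-\tfrac12u+bv$, $[f_1,v]=-bu-\tfrac12v$, and let $G_b$ be the simply connected Lie group with Lie algebra $\mathfrak g_b$. Let $\Sigma$ be the set of pairs $(m,n)\in\mathbb Z\times\mathbb Z$ such that $f_{m,n}(x)=x^3-mx^2+nx-1$ has one real root $c$ and two non-real complex conjugate roots $\alpha,\bar\alpha$, and let $\Sigma'=\Sigma\setminus\{(0,0),(1,1),(2,2)\}$. For $(m,n)\in\Sigma'$ write the non-real root with positive imaginary part as $\alpha=|\alpha|e^{i\phi}$ with $\phi\in(0,\pi)$, and for $k\in\mathbb Z$ define $h_k:\Sigma'\to\mathbb R$ by $h_k(m,n)=\frac{\phi+2k\pi}{\log c}$. Then $G_b$ admits a lattice if and only if $b\in\bigcup_{k\in\mathbb Z}\operatorname{Im}(h_k)$, which is a countable subset of $\mathbb R$.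
   Context: A lattice in a Lie group $G$ is a discrete subgroup $\Gamma$ with $\Gamma\backslash G$ compact. For $(m,n)\in\Sigma'$ the real root $c$ satisfies $c>0$ and $c\neq1$, so $h_k$ is well defined. *)

theory Defs
  imports "HOL-Analysis.Analysis"
begin

text \<open>Concrete model of the simply connected Lie group G_b = R \<ltimes> R^3.
  An element (t, x, w) corresponds to exp(t f1) * exp(x f2 + a u + c v) with w = a + i c.
  Since ad f1 acts on the abelian ideal span(f2,u,v) by f2 |-> f2 and (in the complex
  coordinate w = a + i c of a u + c v) by multiplication with (-1/2 + i b), the group law is
  (t,x,w)(s,y,z) = (t+s, x + e^t y, w + e^(t(-1/2+ib)) z).\<close>

type_synonym Gelem = "real \<times> real \<times> complex"

definition G_mult :: "real \<Rightarrow> Gelem \<Rightarrow> Gelem \<Rightarrow> Gelem" where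
  "G_mult b g h = (case g of (t, x, w) \<Rightarrow> case h of (s, y, z) \<Rightarrow>
     (t + s, x + exp t * y, w + exp (complex_of_real t * Complex (-1/2) b) * z))"

definition G_one :: Gelem where "G_one = (0, 0, 0)"

definition G_inv :: "real \<Rightarrow> Gelem \<Rightarrow> Gelem" where
  "G_inv b g = (case g of (t, x, w) \<Rightarrow>
     (-t, - exp (-t) * x, - exp (complex_of_real (-t) * Complex (-1/2) b) * w))"

definition G_subgroup :: "real \<Rightarrow> Gelem set \<Rightarrow> bool" where
  "G_subgroup b \<Gamma> \<longleftrightarrow> G_one \<in> \<Gamma> \<and>
     (\<forall>g\<in>\<Gamma>. \<forall>h\<in>\<Gamma>. G_mult b g h \<in> \<Gamma>) \<and> (\<forall>g\<in>\<Gamma>. G_inv b g \<in> \<Gamma>)"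

definition G_rcoset :: "real \<Rightarrow> Gelem set \<Rightarrow> Gelem \<Rightarrow> Gelem set" where
  "G_rcoset b \<Gamma> g = (\<lambda>\<gamma>. G_mult b \<gamma> g) ` \<Gamma>"

definition G_lattice :: "real \<Rightarrow> Gelem set \<Rightarrow> bool" where
  "G_lattice b \<Gamma> \<longleftrightarrow> G_subgroup b \<Gamma> \<and> discrete \<Gamma> \<and>
     (\<exists>Q :: Gelem set topology. quotient_map euclidean Q (G_rcoset b \<Gamma>) \<and> compact_space Q)"

definition fmn :: "int \<Rightarrow> int \<Rightarrow> complex \<Rightarrow> complex" where
  "fmn m n x = x^3 - of_int m * x^2 + of_int n * x - 1"

definition Sigma :: "(int \<times> int) set" where
  "Sigma = {(m, n). \<exists>(c::real) (\<alpha>::complex). Im \<alpha> \<noteq> 0 \<and>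
      (\<forall>x. fmn m n x = (x - of_real c) * (x - \<alpha>) * (x - cnj \<alpha>))}"

definition Sigma' :: "(int \<times> int) set" where
  "Sigma' = Sigma - {(0, 0), (1, 1), (2, 2)}"

definition real_root :: "int \<Rightarrow> int \<Rightarrow> real" where
  "real_root m n = (THE c::real. fmn m n (of_real c) = 0)"

definition upper_root :: "int \<Rightarrow> int \<Rightarrow> complex" where
  "upper_root m n = (THE \<alpha>. Im \<alpha> > 0 \<and> fmn m n \<alpha> = 0)"

definition phi_mn :: "int \<Rightarrow> int \<Rightarrow> real" where
  "phi_mn m n = (THE \<phi>. 0 < \<phi> \<and> \<phi> < pi \<and>
     upper_root m n = of_real (cmod (upper_root m n)) * exp (\<i> * of_real \<phi>))"

definition h :: "int \<Rightarrow> int \<times> int \<Rightarrow> real" where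
  "h k mn = (case mn of (m, n) \<Rightarrow> (phi_mn m n + 2 * of_int k * pi) / ln (real_root m n))"

end

theory Submission
  imports Defs
begin


definition E :: "real \<Rightarrow> real \<Rightarrow> complex" where
  "E b t = exp (complex_of_real t * Complex (-1/2) b)"

lemma G_mult_simp[simp]: "G_mult b (t,x,w) (s,y,z) = (t+s, x + exp t * y, w + E b t * z)"
  by (simp add: G_mult_def E_def)

lemma G_inv_simp[simp]: "G_inv b (t,x,w) = (-t, - exp (-t) * x, - E b (-t) * w)"
  by (simp add: G_inv_def E_def)

lemma E_add: "E b (s+t) = E b s * E b t"
  by (simp add: E_def distrib_right exp_add)

lemma E_zero[simp]: "E b 0 = 1" by (simp add: E_def)

lemma E_neg: "E b (-t) * E b t = 1"
  by (metis E_add E_zero add.commute add.right_inverse)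

lemma E_neg': "E b t * E b (-t) = 1"
  using E_neg by (simp add: mult.commute)

lemma E_nonzero: "E b t \<noteq> 0" by (simp add: E_def)

lemma norm_E: "cmod (E b t) = exp (-t/2)"
  by (simp add: E_def norm_exp_eq_Re)

lemma G_assoc: "G_mult b (G_mult b g1 g2) g3 = G_mult b g1 (G_mult b g2 g3)"
  by (cases g1; cases g2; cases g3) (auto simp: E_add exp_add algebra_simps)

lemma G_inv_left: "G_mult b (G_inv b g) g = G_one"
proof (cases g)
  case (fields t x w)
  have "exp (-t) * exp t = 1" by (simp flip: exp_add)
  then show ?thesis using fields E_neg[of b t]
    by (simp add: G_one_def algebra_simps)
qed

lemma G_inv_right: "G_mult b g (G_inv b g) = G_one"
proof (cases g)
  case (fields t x w)
  have "exp t * exp (-t) = 1" by (simp flip: exp_add)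
  then show ?thesis using fields E_neg'[of b t]
    by (simp add: G_one_def algebra_simps)
qed

lemma G_one_left[simp]: "G_mult b G_one g = g"
  by (cases g) (simp add: G_one_def)

lemma G_one_right[simp]: "G_mult b g G_one = g"
  by (cases g) (simp add: G_one_def)

lemma G_inv_inv[simp]: "G_inv b (G_inv b g) = g"
  by (metis G_assoc G_inv_left G_inv_right G_one_left G_one_right)

lemma conj_N: "G_mult b (G_mult b (t,x,w) (0,y,z)) (G_inv b (t,x,w)) = (0, exp t * y, E b t * z)"
proof -
  have "exp t * exp (-t) = 1" by (simp flip: exp_add)
  then show ?thesis using E_neg'[of b t]
    by (simp add: algebra_simps)
qed


type_synonym v3 = "real \<times> real \<times> real"

definition det3 :: "v3 \<Rightarrow> v3 \<Rightarrow> v3 \<Rightarrow> real" where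
  "det3 u v w = fst u * (fst (snd v) * snd (snd w) - snd (snd v) * fst (snd w))
              - fst (snd u) * (fst v * snd (snd w) - snd (snd v) * fst w)
              + snd (snd u) * (fst v * fst (snd w) - fst (snd v) * fst w)"

lemma cramer:
  "det3 v1 v2 v3 *\<^sub>R x = det3 x v2 v3 *\<^sub>R v1 + det3 v1 x v3 *\<^sub>R v2 + det3 v1 v2 x *\<^sub>R v3"
  by (cases x; cases v1; cases v2; cases v3) (simp add: det3_def algebra_simps)

lemma det3_lin:
  "det3 (a1 *\<^sub>R v1 + a2 *\<^sub>R v2 + a3 *\<^sub>R v3) (b1 *\<^sub>R v1 + b2 *\<^sub>R v2 + b3 *\<^sub>R v3)
        (c1 *\<^sub>R v1 + c2 *\<^sub>R v2 + c3 *\<^sub>R v3) = det3 (a1,a2,a3) (b1,b2,b3) (c1,c2,c3) * det3 v1 v2 v3"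
  by (cases v1; cases v2; cases v3) (simp add: det3_def algebra_simps)

lemma det3_lin1: "det3 (a *\<^sub>R x + y) v w = a * det3 x v w + det3 y v w"
  by (cases x; cases y; cases v; cases w) (simp add: det3_def algebra_simps)
lemma det3_lin2: "det3 u (a *\<^sub>R x + y) w = a * det3 u x w + det3 u y w"
  by (cases x; cases y; cases u; cases w) (simp add: det3_def algebra_simps)
lemma det3_lin3: "det3 u v (a *\<^sub>R x + y) = a * det3 u v x + det3 u v y"
  by (cases x; cases y; cases v; cases u) (simp add: det3_def algebra_simps)
lemma det3_diff1: "det3 (x - y) v w = det3 x v w - det3 y v w"
  by (cases x; cases y; cases v; cases w) (simp add: det3_def algebra_simps)
lemma det3_diff2: "det3 u (x - y) w = det3 u x w - det3 u y w"
  by (cases x; cases y; cases u; cases w) (simp add: det3_def algebra_simps)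
lemma det3_diff3: "det3 u v (x - y) = det3 u v x - det3 u v y"
  by (cases x; cases y; cases v; cases u) (simp add: det3_def algebra_simps)
lemma det3_scale1: "det3 (a *\<^sub>R x) v w = a * det3 x v w"
  by (cases x; cases v; cases w) (simp add: det3_def algebra_simps)
lemma det3_scale2: "det3 u (a *\<^sub>R x) w = a * det3 u x w"
  by (cases x; cases u; cases w) (simp add: det3_def algebra_simps)
lemma det3_scale3: "det3 u v (a *\<^sub>R x) = a * det3 u v x"
  by (cases x; cases v; cases u) (simp add: det3_def algebra_simps)
lemma det3_rep:
  "det3 u u w = 0" "det3 u v u = 0" "det3 u v v = 0"
  by (cases u; cases v; cases w; simp add: det3_def algebra_simps)+

lemma det3_Ints:
  assumes "a1 \<in> \<int>" "a2 \<in> \<int>" "a3 \<in> \<int>" "b1 \<in> \<int>" "b2 \<in> \<int>" "b3 \<in> \<int>"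
    "c1 \<in> \<int>" "c2 \<in> \<int>" "c3 \<in> \<int>"
  shows "det3 (a1,a2,a3) (b1,b2,b3) (c1,c2,c3) \<in> \<int>"
  using assms by (simp add: det3_def Ints_diff Ints_add Ints_mult)



lemma det3_big:
  fixes C K :: real
  assumes C: "C \<ge> 0" and K: "K = 10 * C + 1"
    and e: "\<bar>e11\<bar> \<le> C" "\<bar>e12\<bar> \<le> C" "\<bar>e13\<bar> \<le> C" "\<bar>e21\<bar> \<le> C" "\<bar>e22\<bar> \<le> C"
      "\<bar>e23\<bar> \<le> C" "\<bar>e31\<bar> \<le> C" "\<bar>e32\<bar> \<le> C" "\<bar>e33\<bar> \<le> C"
  shows "det3 (K+e11, e12, e13) (e21, K+e22, e23) (e31, e32, K+e33) > 0"
proof -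
  define M where "M = K - C"
  have M: "M \<ge> 9*C + 1" using K M_def by simp
  have Mp: "M > 0" using M C by simp
  have a22: "K+e22 \<ge> M" "K + e22 \<le> M + 2*C" using e M_def by (auto simp: abs_le_iff)
  have a33: "K+e33 \<ge> M" "K + e33 \<le> M + 2*C" using e M_def by (auto simp: abs_le_iff)
  have a11: "K+e11 \<ge> M" using e M_def by (auto simp: abs_le_iff)
  have p1: "(K+e22)*(K+e33) \<ge> M*M" using a22 a33 Mp
    by (intro mult_mono) auto
  have p2: "\<bar>e23*e32\<bar> \<le> C*C" using e C unfolding abs_mult by (meson abs_ge_zero mult_mono)
  have P: "(K+e22)*(K+e33) - e23*e32 \<ge> M*M - C*C" using p1 p2 by linarith
  have MC: "M*M - C*C \<ge> 0" using M C by (smt (verit) mult_mono)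
  have t1: "(K+e11)*((K+e22)*(K+e33) - e23*e32) \<ge> M*(M*M - C*C)"
    using P MC a11 Mp by (meson less_eq_real_def mult_mono order_trans)
  have b1: "\<bar>e21*(K+e33)\<bar> \<le> C*(M+2*C)" using e C a33 Mp unfolding abs_mult
    by (intro mult_mono) auto
  have b2: "\<bar>e23*e31\<bar> \<le> C*C" using e C unfolding abs_mult by (meson abs_ge_zero mult_mono)
  have q1: "\<bar>e21*(K+e33) - e23*e31\<bar> \<le> C*(M + 2*C) + C*C" using b1 b2 by linarith
  have b3: "\<bar>(K+e22)*e31\<bar> \<le> (M+2*C)*C" using e C a22 Mp unfolding abs_mult
    by (intro mult_mono) auto
  have b4: "\<bar>e21*e32\<bar> \<le> C*C" using e C unfolding abs_mult by (meson abs_ge_zero mult_mono)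
  have q2: "\<bar>e21*e32 - (K+e22)*e31\<bar> \<le> C*C + (M + 2*C)*C" using b3 b4 by linarith
  have t2: "\<bar>e12*(e21*(K+e33) - e23*e31)\<bar> \<le> C*(C*(M + 2*C) + C*C)"
    using q1 e C unfolding abs_mult by (meson abs_ge_zero mult_mono)
  have t3: "\<bar>e13*(e21*e32 - (K+e22)*e31)\<bar> \<le> C*(C*C + (M + 2*C)*C)"
    using q2 e C unfolding abs_mult by (meson abs_ge_zero mult_mono)
  have eq: "M*(M*M - C*C) - 2*(C*(C*(M + 2*C) + C*C)) = M*(M*M - 3*(C*C)) - 6*(C*(C*C))"
    by (simp add: algebra_simps)
  have m2: "M*M \<ge> (9*C+1)*(9*C+1)" using M C by (intro mult_mono) auto
  have m3: "M*M - 3*(C*C) \<ge> 78*(C*C) + 1" using m2 C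
    by (simp add: algebra_simps)
  have m4: "M*(M*M - 3*(C*C)) \<ge> (9*C+1)*(78*(C*C)+1)" using M C m3
    by (intro mult_mono) auto
  have m5e: "(9*C+1)*(78*(C*C)+1) - 6*(C*(C*C)) = 696*(C*(C*C)) + 78*(C*C) + 9*C + 1"
    by (simp add: algebra_simps)
  have "C*(C*C) \<ge> 0" "C*C \<ge> 0" using C by auto
  then have m5: "(9*C+1)*(78*(C*C)+1) - 6*(C*(C*C)) > 0" using C m5e by linarith
  have key: "M*(M*M - C*C) - 2*(C*(C*(M + 2*C) + C*C)) > 0"
    using eq m4 m5 by linarith
  have "det3 (K+e11, e12, e13) (e21, K+e22, e23) (e31, e32, K+e33)
     = (K+e11)*((K+e22)*(K+e33) - e23*e32) - e12*(e21*(K+e33) - e23*e31) + e13*(e21*e32 - (K+e22)*e31)"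
    by (simp add: det3_def)
  moreover have "e12*(e21*(K+e33) - e23*e31) \<le> C*(C*(M + 2*C) + C*C)" using t2 by linarith
  moreover have "- (e13*(e21*e32 - (K+e22)*e31)) \<le> C*(C*C + (M + 2*C)*C)" using t3 by linarith
  moreover have "C*(C*C + (M + 2*C)*C) = C*(C*(M + 2*C) + C*C)" by (simp add: algebra_simps)
  ultimately show ?thesis using t1 key by linarith
qed


lemma comp_bounds:
  fixes p :: v3
  shows "\<bar>fst p\<bar> \<le> norm p" "\<bar>fst (snd p)\<bar> \<le> norm p" "\<bar>snd (snd p)\<bar> \<le> norm p"
proof -
  obtain a b c where p: "p = (a,b,c)" by (cases p) auto
  have "norm a \<le> norm (a,b,c)" by (rule norm_fst_le)
  then show "\<bar>fst p\<bar> \<le> norm p" using p by simp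
  have "norm b \<le> norm (b,c)" by (rule norm_fst_le)
  also have "\<dots> \<le> norm (a,(b,c))" by (rule norm_snd_le)
  finally show "\<bar>fst (snd p)\<bar> \<le> norm p" using p by simp
  have "norm c \<le> norm (b,c)" by (rule norm_snd_le)
  also have "\<dots> \<le> norm (a,(b,c))" by (rule norm_snd_le)
  finally show "\<bar>snd (snd p)\<bar> \<le> norm p" using p by simp
qed

lemma coef_extract:
  "det3 (a *\<^sub>R v1 + b *\<^sub>R v2 + c *\<^sub>R v3) v2 v3 = a * det3 v1 v2 v3"
  "det3 v1 (a *\<^sub>R v1 + b *\<^sub>R v2 + c *\<^sub>R v3) v3 = b * det3 v1 v2 v3"
  "det3 v1 v2 (a *\<^sub>R v1 + b *\<^sub>R v2 + c *\<^sub>R v3) = c * det3 v1 v2 v3"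
  by (cases v1; cases v2; cases v3; simp add: det3_def algebra_simps)+

lemma cramer':
  assumes "det3 v1 v2 v3 \<noteq> 0"
  shows "x = (det3 x v2 v3 / det3 v1 v2 v3) *\<^sub>R v1 + (det3 v1 x v3 / det3 v1 v2 v3) *\<^sub>R v2
           + (det3 v1 v2 x / det3 v1 v2 v3) *\<^sub>R v3"
proof -
  have "det3 v1 v2 v3 *\<^sub>R x = det3 v1 v2 v3 *\<^sub>R ((det3 x v2 v3 / det3 v1 v2 v3) *\<^sub>R v1 + (det3 v1 x v3 / det3 v1 v2 v3) *\<^sub>R v2
           + (det3 v1 v2 x / det3 v1 v2 v3) *\<^sub>R v3)"
    using assms by (simp add: scaleR_add_right cramer[of v1 v2 v3 x])
  then show ?thesis using assms by (metis scaleR_cancel_left)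
qed

locale lat =
  fixes L :: "v3 set"
  assumes zero: "0 \<in> L" and add: "x \<in> L \<Longrightarrow> y \<in> L \<Longrightarrow> x + y \<in> L"
    and neg: "x \<in> L \<Longrightarrow> - x \<in> L"
    and disc: "\<exists>\<epsilon>>0. \<forall>x\<in>L. x \<noteq> 0 \<longrightarrow> \<epsilon> \<le> norm x"
    and dense: "\<exists>C. \<forall>y. \<exists>x\<in>L. norm (y - x) \<le> C"
begin

lemma diff: "x \<in> L \<Longrightarrow> y \<in> L \<Longrightarrow> x - y \<in> L"
  using add neg by (metis diff_conv_add_uminus)

lemma natmult: "x \<in> L \<Longrightarrow> real n *\<^sub>R x \<in> L"
proof (induction n)
  case 0
  then show ?case using zero by simp
next
  case (Suc n)
  have "real (Suc n) *\<^sub>R x = x + real n *\<^sub>R x" by (simp add: scaleR_add_left)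
  then show ?case using Suc add by metis
qed

lemma intmult: assumes "x \<in> L" shows "real_of_int k *\<^sub>R x \<in> L"
proof (cases "k \<ge> 0")
  case True
  then show ?thesis using natmult[OF assms, of "nat k"] by simp
next
  case False
  then have "real_of_int k *\<^sub>R x = - (real (nat (-k)) *\<^sub>R x)" by simp
  then show ?thesis using natmult[OF assms, of "nat (-k)"] neg by metis
qed

lemma Intsmult: assumes "x \<in> L" "k \<in> \<int>" shows "k *\<^sub>R x \<in> L"
  using assms intmult by (metis Ints_cases)

lemma finite_ball: "finite (L \<inter> cball 0 B)"
proof -
  obtain \<epsilon> where e: "\<epsilon> > 0" "\<forall>x\<in>L. x \<noteq> 0 \<longrightarrow> \<epsilon> \<le> norm x" using disc by blast
  have "uniform_discrete (L \<inter> cball 0 B)"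
  proof (rule uniformI1[OF e(1)])
    fix x y assume "x \<in> L \<inter> cball 0 B" "y \<in> L \<inter> cball 0 B" "dist x y < \<epsilon>"
    then show "x = y" using e(2) diff[of x y] by (force simp: dist_norm)
  qed
  then show ?thesis using uniform_discrete_finite_iff by blast
qed

lemma exists_indep: "\<exists>v1\<in>L. \<exists>v2\<in>L. \<exists>v3\<in>L. det3 v1 v2 v3 \<noteq> 0"
proof -
  obtain C where C: "\<forall>y. \<exists>x\<in>L. norm (y - x) \<le> C" using dense by blast
  have C0: "C \<ge> 0" using C by (meson norm_ge_zero order_trans)
  define K where "K = 10 * C + 1"
  obtain x1 where x1: "x1 \<in> L" "norm ((K,0,0) - x1) \<le> C" using C by blast
  obtain x2 where x2: "x2 \<in> L" "norm ((0,K,0) - x2) \<le> C" using C by blast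
  obtain x3 where x3: "x3 \<in> L" "norm ((0,0,K) - x3) \<le> C" using C by blast
  define a1 where "a1 = fst x1 - K"
  define a2 where "a2 = fst (snd x1)"
  define a3 where "a3 = snd (snd x1)"
  have a: "x1 = (K + a1, a2, a3)" unfolding a1_def a2_def a3_def by (cases x1) auto
  define b1 where "b1 = fst x2"
  define b2 where "b2 = fst (snd x2) - K"
  define b3 where "b3 = snd (snd x2)"
  have b: "x2 = (b1, K + b2, b3)" unfolding b1_def b2_def b3_def by (cases x2) auto
  define c1 where "c1 = fst x3"
  define c2 where "c2 = fst (snd x3)"
  define c3 where "c3 = snd (snd x3) - K"
  have c: "x3 = (c1, c2, K + c3)" unfolding c1_def c2_def c3_def by (cases x3) auto
  have "\<bar>fst ((K,0,0) - x1)\<bar> \<le> C" "\<bar>fst (snd ((K,0,0) - x1))\<bar> \<le> C" "\<bar>snd (snd ((K,0,0) - x1))\<bar> \<le> C"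
    using comp_bounds x1(2) by (meson order_trans)+
  then have ea: "\<bar>a1\<bar> \<le> C" "\<bar>a2\<bar> \<le> C" "\<bar>a3\<bar> \<le> C" using a by auto
  have "\<bar>fst ((0,K,0) - x2)\<bar> \<le> C" "\<bar>fst (snd ((0,K,0) - x2))\<bar> \<le> C" "\<bar>snd (snd ((0,K,0) - x2))\<bar> \<le> C"
    using comp_bounds x2(2) by (meson order_trans)+
  then have eb: "\<bar>b1\<bar> \<le> C" "\<bar>b2\<bar> \<le> C" "\<bar>b3\<bar> \<le> C" using b by auto
  have "\<bar>fst ((0,0,K) - x3)\<bar> \<le> C" "\<bar>fst (snd ((0,0,K) - x3))\<bar> \<le> C" "\<bar>snd (snd ((0,0,K) - x3))\<bar> \<le> C"
    using comp_bounds x3(2) by (meson order_trans)+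
  then have ec: "\<bar>c1\<bar> \<le> C" "\<bar>c2\<bar> \<le> C" "\<bar>c3\<bar> \<le> C" using c by auto
  have "det3 x1 x2 x3 > 0" unfolding a b c
    by (rule det3_big[OF C0 K_def]) (use ea eb ec in auto)
  then show ?thesis using x1 x2 x3 by force
qed

end

definition Tm :: "real \<Rightarrow> real \<Rightarrow> real \<Rightarrow> v3 \<Rightarrow> v3" where
  "Tm c p q x = (c * fst x, p * fst (snd x) - q * snd (snd x), q * fst (snd x) + p * snd (snd x))"

lemma trace_identity:
  "det3 (Tm c p q u1) u2 u3 + det3 u1 (Tm c p q u2) u3 + det3 u1 u2 (Tm c p q u3) = (c + 2*p) * det3 u1 u2 u3"
  by (cases u1; cases u2; cases u3) (simp add: det3_def Tm_def algebra_simps)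

lemma fact_scale_Ints:
  fixes d :: int and K :: nat and x :: real
  assumes "d \<noteq> 0" "\<bar>d\<bar> \<le> int K" "real_of_int d * x \<in> \<int>"
  shows "(fact K :: real) * x \<in> \<int>"
proof -
  have "nat \<bar>d\<bar> dvd fact K" using assms by (intro dvd_fact) auto
  then obtain q where q: "fact K = nat \<bar>d\<bar> * q" by (elim dvdE)
  have "(fact K :: real) = real (fact K)" by simp
  also have "\<dots> = real (nat \<bar>d\<bar>) * real q" using q by (metis of_nat_mult)
  also have "\<dots> = real_of_int d * (sgn (real_of_int d) * real q)" using assms(1)
    by (cases "d > 0") (auto simp: abs_if)
  finally have "(fact K :: real) * x = (sgn (real_of_int d) * real q) * (real_of_int d * x)" by simp
  moreover have "sgn (real_of_int d) * real q \<in> \<int>" by (simp add: sgn_real_def)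
  ultimately show ?thesis using assms(3) by (metis Ints_mult)
qed

context lat begin

lemma pigeon:
  assumes v: "v1 \<in> L" "v2 \<in> L" "v3 \<in> L" and D0: "det3 v1 v2 v3 \<noteq> 0"
  shows "\<exists>D::real. D \<noteq> 0 \<and> (\<forall>l\<in>L. D * (det3 l v2 v3 / det3 v1 v2 v3) \<in> \<int> \<and>
            D * (det3 v1 l v3 / det3 v1 v2 v3) \<in> \<int> \<and> D * (det3 v1 v2 l / det3 v1 v2 v3) \<in> \<int>)"
proof -
  define \<Delta> where "\<Delta> = det3 v1 v2 v3"
  define r1 where "r1 x = det3 x v2 v3 / \<Delta>" for x
  define r2 where "r2 x = det3 v1 x v3 / \<Delta>" for x
  define r3 where "r3 x = det3 v1 v2 x / \<Delta>" for x
  have cr: "x = r1 x *\<^sub>R v1 + r2 x *\<^sub>R v2 + r3 x *\<^sub>R v3" for x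
    unfolding r1_def r2_def r3_def \<Delta>_def using cramer'[OF D0] by blast
  define red where "red x = x - of_int \<lfloor>r1 x\<rfloor> *\<^sub>R v1 - of_int \<lfloor>r2 x\<rfloor> *\<^sub>R v2 - of_int \<lfloor>r3 x\<rfloor> *\<^sub>R v3" for x
  define B where "B = norm v1 + norm v2 + norm v3"
  define F where "F = L \<inter> cball 0 B"
  have finF: "finite F" unfolding F_def by (rule finite_ball)
  define K where "K = card F"
  have redL: "red x \<in> L" if "x \<in> L" for x
    unfolding red_def using that v by (intro diff intmult)
  have red_eq: "red x = (r1 x - of_int \<lfloor>r1 x\<rfloor>) *\<^sub>R v1 + (r2 x - of_int \<lfloor>r2 x\<rfloor>) *\<^sub>R v2
      + (r3 x - of_int \<lfloor>r3 x\<rfloor>) *\<^sub>R v3" for x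
    unfolding red_def by (subst (1) cr[of x]) (simp add: algebra_simps)
  have fr: "\<bar>y - of_int \<lfloor>y\<rfloor>\<bar> \<le> 1" for y :: real
    by (smt (verit) floor_le_one real_of_int_floor_add_one_gt of_int_floor_le)
  have nb: "norm (a *\<^sub>R w) \<le> norm w" if "\<bar>a\<bar> \<le> 1" for a and w :: v3
    using that by (simp add: mult_left_le_one_le)
  have rednorm: "norm (red x) \<le> B" for x
  proof -
    have "norm (red x) \<le> norm ((r1 x - of_int \<lfloor>r1 x\<rfloor>) *\<^sub>R v1) + norm ((r2 x - of_int \<lfloor>r2 x\<rfloor>) *\<^sub>R v2)
      + norm ((r3 x - of_int \<lfloor>r3 x\<rfloor>) *\<^sub>R v3)"
      unfolding red_eq by (meson norm_triangle_le norm_triangle_ineq add_mono order_refl)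
    then show ?thesis unfolding B_def using nb[OF fr] by (smt (verit))
  qed
  have redF: "red x \<in> F" if "x \<in> L" for x
    unfolding F_def using redL[OF that] rednorm by simp
  have key: "\<exists>d::int. d \<noteq> 0 \<and> \<bar>d\<bar> \<le> int K \<and> of_int d * r1 l \<in> \<int> \<and> of_int d * r2 l \<in> \<int> \<and> of_int d * r3 l \<in> \<int>"
    if l: "l \<in> L" for l
  proof -
    define g where "g j = red (real j *\<^sub>R l)" for j :: nat
    have gF: "g ` {0..K} \<subseteq> F" unfolding g_def using redF natmult[OF l] by blast
    have "\<not> inj_on g {0..K}"
    proof
      assume "inj_on g {0..K}"
      then have "card {0..K} \<le> card F" using card_inj_on_le gF finF by blast
      then show False unfolding K_def by simp
    qed
    then obtain i j where ij: "i \<in> {0..K}" "j \<in> {0..K}" "i \<noteq> j" "g i = g j"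
      unfolding inj_on_def by blast
    define d where "d = int j - int i"
    define k1 where "k1 = (of_int :: int \<Rightarrow> real) \<lfloor>r1 (real j *\<^sub>R l)\<rfloor> - of_int \<lfloor>r1 (real i *\<^sub>R l)\<rfloor>"
    define k2 where "k2 = (of_int :: int \<Rightarrow> real) \<lfloor>r2 (real j *\<^sub>R l)\<rfloor> - of_int \<lfloor>r2 (real i *\<^sub>R l)\<rfloor>"
    define k3 where "k3 = (of_int :: int \<Rightarrow> real) \<lfloor>r3 (real j *\<^sub>R l)\<rfloor> - of_int \<lfloor>r3 (real i *\<^sub>R l)\<rfloor>"
    have kI: "k1 \<in> \<int>" "k2 \<in> \<int>" "k3 \<in> \<int>" unfolding k1_def k2_def k3_def by auto
    have dl: "real_of_int d *\<^sub>R l = k1 *\<^sub>R v1 + k2 *\<^sub>R v2 + k3 *\<^sub>R v3"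
    proof -
      have "real_of_int d *\<^sub>R l = real j *\<^sub>R l - real i *\<^sub>R l" unfolding d_def by (simp add: algebra_simps)
      also have "\<dots> = k1 *\<^sub>R v1 + k2 *\<^sub>R v2 + k3 *\<^sub>R v3"
        using ij(4) unfolding g_def red_def k1_def k2_def k3_def by (simp add: algebra_simps)
      finally show ?thesis .
    qed
    have "of_int d * r1 l = k1"
      using arg_cong[OF dl, of "\<lambda>x. det3 x v2 v3 / \<Delta>"] D0 unfolding r1_def \<Delta>_def
      by (simp add: coef_extract det3_scale1)
    moreover have "of_int d * r2 l = k2"
      using arg_cong[OF dl, of "\<lambda>x. det3 v1 x v3 / \<Delta>"] D0 unfolding r2_def \<Delta>_def
      by (simp add: coef_extract det3_scale2)
    moreover have "of_int d * r3 l = k3"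
      using arg_cong[OF dl, of "\<lambda>x. det3 v1 v2 x / \<Delta>"] D0 unfolding r3_def \<Delta>_def
      by (simp add: coef_extract det3_scale3)
    moreover have "d \<noteq> 0" "\<bar>d\<bar> \<le> int K" using ij unfolding d_def by auto
    ultimately show ?thesis using kI by metis
  qed
  show ?thesis
  proof (intro exI[of _ "fact K"] conjI ballI)
    show "(fact K :: real) \<noteq> 0" by simp
    fix l assume l: "l \<in> L"
    obtain d where d: "d \<noteq> 0" "\<bar>d\<bar> \<le> int K" "of_int d * r1 l \<in> \<int>" "of_int d * r2 l \<in> \<int>" "of_int d * r3 l \<in> \<int>"
      using key[OF l] by blast
    show "fact K * (det3 l v2 v3 / det3 v1 v2 v3) \<in> \<int>"
      using fact_scale_Ints[OF d(1,2,3)] unfolding r1_def \<Delta>_def .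
    show "fact K * (det3 v1 l v3 / det3 v1 v2 v3) \<in> \<int>"
      using fact_scale_Ints[OF d(1,2,4)] unfolding r2_def \<Delta>_def .
    show "fact K * (det3 v1 v2 l / det3 v1 v2 v3) \<in> \<int>"
      using fact_scale_Ints[OF d(1,2,5)] unfolding r3_def \<Delta>_def .
  qed
qed


lemma nat_floor_abs_Ints: "x \<in> \<int> \<Longrightarrow> real (nat \<lfloor>\<bar>x\<bar>\<rfloor>) = \<bar>x\<bar>"
  by (metis Ints_abs abs_ge_zero floor_of_int of_int_floor_cancel of_nat_nat zero_le_floor Ints_cases)

lemma det3_scale_all: "det3 (D*a1, D*a2, D*a3) (D*b1, D*b2, D*b3) (D*c1, D*c2, D*c3)
   = D^3 * det3 (a1,a2,a3) (b1,b2,b3) (c1,c2,c3)"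
  by (simp add: det3_def algebra_simps power3_eq_cube)

lemma basis:
  "\<exists>u1\<in>L. \<exists>u2\<in>L. \<exists>u3\<in>L. det3 u1 u2 u3 \<noteq> 0 \<and>
     (\<forall>l\<in>L. det3 l u2 u3 / det3 u1 u2 u3 \<in> \<int> \<and> det3 u1 l u3 / det3 u1 u2 u3 \<in> \<int>
            \<and> det3 u1 u2 l / det3 u1 u2 u3 \<in> \<int>)"
proof -
  obtain v1 v2 v3 where v: "v1 \<in> L" "v2 \<in> L" "v3 \<in> L" and D0: "det3 v1 v2 v3 \<noteq> 0"
    using exists_indep by blast
  define \<Delta> where "\<Delta> = det3 v1 v2 v3"
  obtain D where D: "D \<noteq> 0" and DI: "\<And>l. l \<in> L \<Longrightarrow> D * (det3 l v2 v3 / \<Delta>) \<in> \<int> \<and>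
            D * (det3 v1 l v3 / \<Delta>) \<in> \<int> \<and> D * (det3 v1 v2 l / \<Delta>) \<in> \<int>"
    using pigeon[OF v D0] unfolding \<Delta>_def by blast
  define r1 where "r1 x = det3 x v2 v3 / \<Delta>" for x
  define r2 where "r2 x = det3 v1 x v3 / \<Delta>" for x
  define r3 where "r3 x = det3 v1 v2 x / \<Delta>" for x
  have cr: "x = r1 x *\<^sub>R v1 + r2 x *\<^sub>R v2 + r3 x *\<^sub>R v3" for x
    unfolding r1_def r2_def r3_def \<Delta>_def using cramer'[OF D0] by blast
  have detI: "det3 w1 w2 w3 * (D^3 / \<Delta>) \<in> \<int>" if w: "w1 \<in> L" "w2 \<in> L" "w3 \<in> L" for w1 w2 w3
  proof -
    have "det3 w1 w2 w3 = det3 (r1 w1 *\<^sub>R v1 + r2 w1 *\<^sub>R v2 + r3 w1 *\<^sub>R v3)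
      (r1 w2 *\<^sub>R v1 + r2 w2 *\<^sub>R v2 + r3 w2 *\<^sub>R v3) (r1 w3 *\<^sub>R v1 + r2 w3 *\<^sub>R v2 + r3 w3 *\<^sub>R v3)"
      using cr by metis
    also have "\<dots> = det3 (r1 w1, r2 w1, r3 w1) (r1 w2, r2 w2, r3 w2) (r1 w3, r2 w3, r3 w3) * \<Delta>"
      unfolding \<Delta>_def by (rule det3_lin)
    finally have "det3 w1 w2 w3 * (D^3 / \<Delta>) = D^3 * det3 (r1 w1, r2 w1, r3 w1) (r1 w2, r2 w2, r3 w2) (r1 w3, r2 w3, r3 w3)"
      using D0 unfolding \<Delta>_def by simp
    also have "\<dots> = det3 (D * r1 w1, D * r2 w1, D * r3 w1) (D * r1 w2, D * r2 w2, D * r3 w2) (D * r1 w3, D * r2 w3, D * r3 w3)"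
      by (rule det3_scale_all[symmetric])
    also have "\<dots> \<in> \<int>" using DI[OF w(1)] DI[OF w(2)] DI[OF w(3)] unfolding r1_def r2_def r3_def
      by (intro det3_Ints) auto
    finally show ?thesis .
  qed
  define P where "P = (\<lambda>(w1,w2,w3). w1 \<in> L \<and> w2 \<in> L \<and> w3 \<in> L \<and> det3 w1 w2 w3 \<noteq> 0)"
  define m where "m = (\<lambda>(w1,w2,w3). nat \<lfloor>\<bar>det3 w1 w2 w3 * (D^3 / \<Delta>)\<bar>\<rfloor>)"
  have "P (v1,v2,v3)" unfolding P_def using v D0 by simp
  then obtain u where uP: "P u" and umin: "\<And>w. P w \<Longrightarrow> m u \<le> m w"
    using ex_has_least_nat[of P "(v1,v2,v3)" m] by blast
  obtain u1 u2 u3 where u: "u = (u1,u2,u3)" by (cases u) auto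
  have uL: "u1 \<in> L" "u2 \<in> L" "u3 \<in> L" and Du: "det3 u1 u2 u3 \<noteq> 0" using uP u P_def by auto
  have mval: "real (m (w1,w2,w3)) = \<bar>det3 w1 w2 w3\<bar> * \<bar>D^3 / \<Delta>\<bar>" if "w1 \<in> L" "w2 \<in> L" "w3 \<in> L" for w1 w2 w3
    unfolding m_def using nat_floor_abs_Ints[OF detI[OF that]] by (simp add: abs_mult)
  have Dpos: "\<bar>D^3 / \<Delta>\<bar> > 0" using D D0 \<Delta>_def by simp
  have smaller: False if w: "w1 \<in> L" "w2 \<in> L" "w3 \<in> L" "det3 w1 w2 w3 \<noteq> 0"
     "\<bar>det3 w1 w2 w3\<bar> < \<bar>det3 u1 u2 u3\<bar>" for w1 w2 w3
  proof -
    have "P (w1,w2,w3)" using w P_def by simp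
    then have "m u \<le> m (w1,w2,w3)" by (rule umin)
    then have "real (m (u1,u2,u3)) \<le> real (m (w1,w2,w3))" using u by simp
    then have "\<bar>det3 u1 u2 u3\<bar> * \<bar>D^3 / \<Delta>\<bar> \<le> \<bar>det3 w1 w2 w3\<bar> * \<bar>D^3 / \<Delta>\<bar>"
      using mval uL w by simp
    then show False using mult_strict_right_mono[OF w(5) Dpos] by linarith
  qed
  have frac: "0 < \<bar>s - of_int \<lfloor>s\<rfloor>\<bar> \<and> \<bar>s - of_int \<lfloor>s\<rfloor>\<bar> < 1" if "s \<notin> \<int>" for s :: real
  proof -
    have a: "of_int \<lfloor>s\<rfloor> \<le> s" by (rule of_int_floor_le)
    have b: "s < of_int \<lfloor>s\<rfloor> + 1" by (rule real_of_int_floor_add_one_gt)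
    have c: "s \<noteq> of_int \<lfloor>s\<rfloor>" using that by (metis Ints_of_int)
    have d: "\<bar>s - of_int \<lfloor>s\<rfloor>\<bar> = s - of_int \<lfloor>s\<rfloor>" using a by simp
    show ?thesis unfolding d using a b c by linarith
  qed
  have "det3 l u2 u3 / det3 u1 u2 u3 \<in> \<int> \<and> det3 u1 l u3 / det3 u1 u2 u3 \<in> \<int>
            \<and> det3 u1 u2 l / det3 u1 u2 u3 \<in> \<int>" if l: "l \<in> L" for l
  proof (intro conjI)
    show "det3 l u2 u3 / det3 u1 u2 u3 \<in> \<int>"
    proof (rule ccontr)
      define s where "s = det3 l u2 u3 / det3 u1 u2 u3"
      assume "det3 l u2 u3 / det3 u1 u2 u3 \<notin> \<int>"
      then have f: "0 < \<bar>s - of_int \<lfloor>s\<rfloor>\<bar>" "\<bar>s - of_int \<lfloor>s\<rfloor>\<bar> < 1" using frac s_def by auto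
      define l' where "l' = l - of_int \<lfloor>s\<rfloor> *\<^sub>R u1"
      have l'L: "l' \<in> L" unfolding l'_def using l uL by (intro diff intmult)
      have "det3 l' u2 u3 = (s - of_int \<lfloor>s\<rfloor>) * det3 u1 u2 u3"
        unfolding l'_def s_def using Du by (simp add: det3_diff1 det3_scale1 algebra_simps)
      then show False using smaller[OF l'L uL(2,3)] f Du by (simp add: abs_mult)
    qed
    show "det3 u1 l u3 / det3 u1 u2 u3 \<in> \<int>"
    proof (rule ccontr)
      define s where "s = det3 u1 l u3 / det3 u1 u2 u3"
      assume "det3 u1 l u3 / det3 u1 u2 u3 \<notin> \<int>"
      then have f: "0 < \<bar>s - of_int \<lfloor>s\<rfloor>\<bar>" "\<bar>s - of_int \<lfloor>s\<rfloor>\<bar> < 1" using frac s_def by auto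
      define l' where "l' = l - of_int \<lfloor>s\<rfloor> *\<^sub>R u2"
      have l'L: "l' \<in> L" unfolding l'_def using l uL by (intro diff intmult)
      have "det3 u1 l' u3 = (s - of_int \<lfloor>s\<rfloor>) * det3 u1 u2 u3"
        unfolding l'_def s_def using Du by (simp add: det3_diff2 det3_scale2 algebra_simps)
      then show False using smaller[OF uL(1) l'L uL(3)] f Du by (simp add: abs_mult)
    qed
    show "det3 u1 u2 l / det3 u1 u2 u3 \<in> \<int>"
    proof (rule ccontr)
      define s where "s = det3 u1 u2 l / det3 u1 u2 u3"
      assume "det3 u1 u2 l / det3 u1 u2 u3 \<notin> \<int>"
      then have f: "0 < \<bar>s - of_int \<lfloor>s\<rfloor>\<bar>" "\<bar>s - of_int \<lfloor>s\<rfloor>\<bar> < 1" using frac s_def by auto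
      define l' where "l' = l - of_int \<lfloor>s\<rfloor> *\<^sub>R u3"
      have l'L: "l' \<in> L" unfolding l'_def using l uL by (intro diff intmult)
      have "det3 u1 u2 l' = (s - of_int \<lfloor>s\<rfloor>) * det3 u1 u2 u3"
        unfolding l'_def s_def using Du by (simp add: det3_diff3 det3_scale3 algebra_simps)
      then show False using smaller[OF uL(1,2) l'L] f Du by (simp add: abs_mult)
    qed
  qed
  then show ?thesis using uL Du by blast
qed


lemma trace_int:
  assumes T: "\<And>x. x \<in> L \<Longrightarrow> Tm c p q x \<in> L"
  shows "c + 2*p \<in> \<int>"
proof -
  obtain u1 u2 u3 where uL: "u1 \<in> L" "u2 \<in> L" "u3 \<in> L" and Du: "det3 u1 u2 u3 \<noteq> 0"
    and I: "\<And>l. l \<in> L \<Longrightarrow> det3 l u2 u3 / det3 u1 u2 u3 \<in> \<int> \<and> det3 u1 l u3 / det3 u1 u2 u3 \<in> \<int>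
            \<and> det3 u1 u2 l / det3 u1 u2 u3 \<in> \<int>"
    using basis by blast
  have "c + 2*p = det3 (Tm c p q u1) u2 u3 / det3 u1 u2 u3 + det3 u1 (Tm c p q u2) u3 / det3 u1 u2 u3
     + det3 u1 u2 (Tm c p q u3) / det3 u1 u2 u3"
    using trace_identity[of c p q u1 u2 u3] Du by (simp add: field_simps)
  also have "\<dots> \<in> \<int>" using I[OF T[OF uL(1)]] I[OF T[OF uL(2)]] I[OF T[OF uL(3)]]
    by (intro Ints_add) auto
  finally show ?thesis .
qed

end


lemma sub_mult: "G_subgroup b \<Gamma> \<Longrightarrow> g \<in> \<Gamma> \<Longrightarrow> hh \<in> \<Gamma> \<Longrightarrow> G_mult b g hh \<in> \<Gamma>"
  unfolding G_subgroup_def by blast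
lemma sub_inv: "G_subgroup b \<Gamma> \<Longrightarrow> g \<in> \<Gamma> \<Longrightarrow> G_inv b g \<in> \<Gamma>"
  unfolding G_subgroup_def by blast
lemma sub_one: "G_subgroup b \<Gamma> \<Longrightarrow> G_one \<in> \<Gamma>"
  unfolding G_subgroup_def by blast

lemma coset_eq:
  assumes S: "G_subgroup b \<Gamma>"
  shows "G_rcoset b \<Gamma> x = G_rcoset b \<Gamma> u \<longleftrightarrow> (\<exists>\<gamma>\<in>\<Gamma>. u = G_mult b \<gamma> x)"
proof
  assume "G_rcoset b \<Gamma> x = G_rcoset b \<Gamma> u"
  moreover have "u \<in> G_rcoset b \<Gamma> u" unfolding G_rcoset_def using sub_one[OF S]
    by (metis G_one_left image_eqI)
  ultimately show "\<exists>\<gamma>\<in>\<Gamma>. u = G_mult b \<gamma> x" unfolding G_rcoset_def by auto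
next
  assume "\<exists>\<gamma>\<in>\<Gamma>. u = G_mult b \<gamma> x"
  then obtain \<gamma> where g: "\<gamma> \<in> \<Gamma>" "u = G_mult b \<gamma> x" by blast
  show "G_rcoset b \<Gamma> x = G_rcoset b \<Gamma> u"
  proof
    show "G_rcoset b \<Gamma> x \<subseteq> G_rcoset b \<Gamma> u"
    proof
      fix y assume "y \<in> G_rcoset b \<Gamma> x"
      then obtain \<delta> where d: "\<delta> \<in> \<Gamma>" "y = G_mult b \<delta> x" unfolding G_rcoset_def by auto
      have "y = G_mult b (G_mult b \<delta> (G_inv b \<gamma>)) u"
        using d g by (metis G_assoc G_inv_left G_one_left)
      moreover have "G_mult b \<delta> (G_inv b \<gamma>) \<in> \<Gamma>" using S d g sub_mult sub_inv by blast
      ultimately show "y \<in> G_rcoset b \<Gamma> u" unfolding G_rcoset_def by blast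
    qed
    show "G_rcoset b \<Gamma> u \<subseteq> G_rcoset b \<Gamma> x"
    proof
      fix y assume "y \<in> G_rcoset b \<Gamma> u"
      then obtain \<delta> where d: "\<delta> \<in> \<Gamma>" "y = G_mult b \<delta> u" unfolding G_rcoset_def by auto
      have "y = G_mult b (G_mult b \<delta> \<gamma>) x" using d g by (simp add: G_assoc)
      moreover have "G_mult b \<delta> \<gamma> \<in> \<Gamma>" using S d g sub_mult by blast
      ultimately show "y \<in> G_rcoset b \<Gamma> x" unfolding G_rcoset_def by blast
    qed
  qed
qed

lemma G_mult_alt: "G_mult b g = (\<lambda>hh. (fst g + fst hh, fst (snd g) + exp (fst g) * fst (snd hh),
    snd (snd g) + E b (fst g) * snd (snd hh)))"
  by (rule ext, metis G_mult_simp prod.collapse)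

lemma cont_left: "continuous_on UNIV (G_mult b g)"
  unfolding G_mult_alt by (intro continuous_intros)

lemma stepA:
  assumes "G_lattice b \<Gamma>"
  shows "\<exists>R. \<forall>g. \<exists>\<gamma>\<in>\<Gamma>. norm (G_mult b \<gamma> g) < R"
proof -
  have S: "G_subgroup b \<Gamma>" using assms G_lattice_def by blast
  obtain Q where qm: "quotient_map euclidean Q (G_rcoset b \<Gamma>)" and cs: "compact_space Q"
    using assms G_lattice_def by blast
  define f where "f = G_rcoset b \<Gamma>"
  define U where "U r = f ` ball 0 (real r)" for r :: nat
  have top: "topspace Q = range f" using qm unfolding quotient_map_def f_def by simp
  have pre: "{x \<in> topspace euclidean. f x \<in> U r} = (\<Union>\<gamma>\<in>\<Gamma>. G_mult b \<gamma> -` ball 0 (real r))" for r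
  proof -
    have "f x \<in> U r \<longleftrightarrow> (\<exists>\<gamma>\<in>\<Gamma>. G_mult b \<gamma> x \<in> ball 0 (real r))" for x
      unfolding U_def f_def using coset_eq[OF S, of x] by (auto simp: image_iff)
    then show ?thesis unfolding topspace_euclidean by blast
  qed
  have opU: "openin Q (U r)" for r
  proof -
    have "U r \<subseteq> topspace Q" unfolding top U_def by auto
    moreover have "open (\<Union>\<gamma>\<in>\<Gamma>. G_mult b \<gamma> -` ball 0 (real r))"
      by (intro open_UN ballI open_vimage cont_left open_ball)
    ultimately show ?thesis using qm pre unfolding quotient_map_def f_def by auto
  qed
  have cov: "topspace Q \<subseteq> \<Union>(range U)"
  proof
    fix y assume "y \<in> topspace Q"
    then obtain x where x: "y = f x" using top by auto
    have "x \<in> ball 0 (real (nat \<lceil>norm x\<rceil> + 1))" by (simp; linarith)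
    then show "y \<in> \<Union>(range U)" unfolding U_def x by blast
  qed
  obtain \<F> where F: "finite \<F>" "\<F> \<subseteq> range U" "topspace Q \<subseteq> \<Union>\<F>"
    using cs cov opU unfolding compact_space_alt by (metis (no_types, lifting) rangeE)
  obtain C where C: "C \<subseteq> UNIV" "finite C" "\<F> = U ` C"
    using finite_subset_image[OF F(1,2)] by blast
  show ?thesis
  proof (intro exI allI)
    fix g
    have "f g \<in> topspace Q" using top by auto
    then obtain r where r: "r \<in> C" "f g \<in> U r" using F(3) C(3) by auto
    then obtain u where u: "u \<in> ball 0 (real r)" "f g = f u" unfolding U_def by auto
    then obtain \<gamma> where "\<gamma> \<in> \<Gamma>" "u = G_mult b \<gamma> g" using coset_eq[OF S] f_def by blast
    moreover have "real r \<le> real (\<Sum>C)" using r(1) C(2) by (simp add: member_le_sum)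
    ultimately show "\<exists>\<gamma>\<in>\<Gamma>. norm (G_mult b \<gamma> g) < real (\<Sum>C)" using u(1) by force
  qed
qed


lemma comp3:
  fixes p :: "real \<times> real \<times> complex"
  shows "\<bar>fst p\<bar> \<le> norm p" "\<bar>fst (snd p)\<bar> \<le> norm p" "cmod (snd (snd p)) \<le> norm p"
proof -
  obtain a bb c where p: "p = (a,bb,c)" by (cases p) auto
  have "norm a \<le> norm (a,bb,c)" by (rule norm_fst_le)
  then show "\<bar>fst p\<bar> \<le> norm p" using p by simp
  have "norm bb \<le> norm (bb,c)" by (rule norm_fst_le)
  also have "\<dots> \<le> norm (a,(bb,c))" by (rule norm_snd_le)
  finally show "\<bar>fst (snd p)\<bar> \<le> norm p" using p by simp
  have "norm c \<le> norm (bb,c)" by (rule norm_snd_le)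
  also have "\<dots> \<le> norm (a,(bb,c))" by (rule norm_snd_le)
  finally show "cmod (snd (snd p)) \<le> norm p" using p by simp
qed

lemma stepB1:
  assumes "\<forall>g. \<exists>\<gamma>\<in>\<Gamma>. norm (G_mult b \<gamma> g) < R"
  shows "\<exists>\<gamma>\<in>\<Gamma>. fst \<gamma> \<noteq> 0"
proof -
  obtain \<gamma> where g: "\<gamma> \<in> \<Gamma>" "norm (G_mult b \<gamma> (R,0,0)) < R" using assms by blast
  obtain t x w where gt: "\<gamma> = (t,x,w)" by (cases \<gamma>) auto
  have "\<bar>t + R\<bar> < R" using comp3(1)[of "G_mult b \<gamma> (R,0,0)"] g(2) gt by simp
  then have "t \<noteq> 0" by simp
  then show ?thesis using g gt by force
qed

lemma exp_inv1: "exp (s::real) * exp (-s) = 1" by (simp flip: exp_add)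
lemma exp_inv2: "exp (-s::real) * exp s = 1" by (simp flip: exp_add)

lemma comm:
  "G_mult b (G_mult b (G_mult b (s,y,z) (t0,x0,w0)) (G_inv b (s,y,z))) (G_inv b (t0,x0,w0))
    = (0, (1 - exp t0)*y + (exp s - 1)*x0, (1 - E b t0)*z + (E b s - 1)*w0)"
proof -
  have e1: "exp (s + t0) * exp (-s) = exp t0" by (simp add: exp_add exp_inv1 mult.commute mult.left_commute)
  have e2: "E b (s + t0) * E b (-s) = E b t0" by (simp add: E_add E_neg' mult.commute mult.left_commute)
  show ?thesis using e1 e2 exp_inv1[of t0] E_neg'[of b t0]
    by (simp add: algebra_simps)
qed

lemma stepB2:
  assumes S: "G_subgroup b \<Gamma>" and R: "\<forall>g. \<exists>\<gamma>\<in>\<Gamma>. norm (G_mult b \<gamma> g) < R"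
    and g0: "(t0,x0,w0) \<in> \<Gamma>" and t0: "t0 \<noteq> 0"
  shows "\<exists>C. \<forall>Y Z. \<exists>y z. (0,y,z) \<in> \<Gamma> \<and> norm ((Y,Z) - (y,z)) \<le> C"
proof -
  define c where "c = exp t0"
  define \<mu> where "\<mu> = E b t0"
  have c1: "c \<noteq> 1" using t0 c_def by simp
  have m1: "\<mu> \<noteq> 1"
  proof
    assume "\<mu> = 1"
    then have "exp (-t0/2) = 1" using norm_E[of b t0] \<mu>_def by simp
    then show False using t0 by simp
  qed
  define C1 where "C1 = \<bar>1 - c\<bar> * exp R * R + (exp R + 1) * \<bar>x0\<bar>"
  define C2 where "C2 = cmod (1 - \<mu>) * exp R * R + (exp R + 1) * cmod w0"
  show ?thesis
  proof (rule exI[of _ "C1 + C2"], intro allI)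
    fix Y Z
    define Y' where "Y' = Y / (1 - c)"
    define Z' where "Z' = Z / (1 - \<mu>)"
    obtain \<gamma> where g: "\<gamma> \<in> \<Gamma>" "norm (G_mult b \<gamma> (0,Y',Z')) < R" using R by blast
    obtain s y1 z1 where gt: "\<gamma> = (s,y1,z1)" by (cases \<gamma>) auto
    define k1 where "k1 = y1 + exp s * Y'"
    define k2 where "k2 = z1 + E b s * Z'"
    have gk: "G_mult b \<gamma> (0,Y',Z') = (s, k1, k2)" unfolding gt k1_def k2_def by simp
    have sR: "\<bar>s\<bar> < R" and k1R: "\<bar>k1\<bar> < R" and k2R: "cmod k2 < R"
      using comp3[of "G_mult b \<gamma> (0,Y',Z')"] g(2) unfolding gk by auto
    have R0: "R > 0" using sR by simp
    define \<delta> where "\<delta> = G_inv b \<gamma>"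
    have dG: "\<delta> \<in> \<Gamma>" using sub_inv[OF S g(1)] \<delta>_def by simp
    have dt: "\<delta> = (-s, - exp (-s) * y1, - E b (-s) * z1)" unfolding \<delta>_def gt by simp
    define l1 where "l1 = (1 - c) * (- exp (-s) * y1) + (exp (-s) - 1) * x0"
    define l2 where "l2 = (1 - \<mu>) * (- E b (-s) * z1) + (E b (-s) - 1) * w0"
    have lG: "(0, l1, l2) \<in> \<Gamma>"
    proof -
      have "G_mult b (G_mult b (G_mult b \<delta> (t0,x0,w0)) (G_inv b \<delta>)) (G_inv b (t0,x0,w0)) = (0,l1,l2)"
        unfolding dt comm l1_def l2_def c_def \<mu>_def by simp
      moreover have "G_mult b (G_mult b (G_mult b \<delta> (t0,x0,w0)) (G_inv b \<delta>)) (G_inv b (t0,x0,w0)) \<in> \<Gamma>"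
        using S dG g0 by (intro sub_mult sub_inv)
      ultimately show ?thesis by simp
    qed
    have es: "exp (-s) \<le> exp R" using sR by simp
    have Es: "cmod (E b (-s)) \<le> exp R" using sR norm_E[of b "-s"] by simp
    have d1: "l1 - Y = - (1 - c) * exp (-s) * k1 + (exp (-s) - 1) * x0"
    proof -
      have "- exp (-s) * y1 = Y' - exp (-s) * k1"
        unfolding k1_def using exp_inv2[of s] by (simp add: algebra_simps)
      moreover have "(1 - c) * Y' = Y" unfolding Y'_def using c1 by simp
      ultimately show ?thesis unfolding l1_def by (simp add: algebra_simps)
    qed
    have d2: "l2 - Z = - (1 - \<mu>) * E b (-s) * k2 + (E b (-s) - 1) * w0"
    proof -
      have "- E b (-s) * z1 = Z' - E b (-s) * k2"
        unfolding k2_def using E_neg[of b s] by (simp add: algebra_simps)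
      moreover have "(1 - \<mu>) * Z' = Z" unfolding Z'_def using m1 by simp
      ultimately show ?thesis unfolding l2_def by (simp add: algebra_simps)
    qed
    have b1: "\<bar>l1 - Y\<bar> \<le> C1"
    proof -
      have "\<bar>l1 - Y\<bar> \<le> \<bar>1 - c\<bar> * exp (-s) * \<bar>k1\<bar> + (exp (-s) + 1) * \<bar>x0\<bar>"
      proof -
        have a: "\<bar>- (1 - c) * exp (-s) * k1\<bar> = \<bar>1 - c\<bar> * exp (-s) * \<bar>k1\<bar>" by (simp add: abs_mult abs_minus_commute)
        have "\<bar>exp (-s) - 1\<bar> \<le> exp (-s) + 1" using exp_gt_zero[of "-s"] by linarith
        then have bb: "\<bar>(exp (-s) - 1) * x0\<bar> \<le> (exp (-s) + 1) * \<bar>x0\<bar>" unfolding abs_mult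
          by (rule mult_right_mono) simp
        show ?thesis unfolding d1 using a bb abs_triangle_ineq[of "- (1 - c) * exp (-s) * k1" "(exp (-s) - 1) * x0"]
          by linarith
      qed
      also have "\<dots> \<le> \<bar>1 - c\<bar> * exp R * R + (exp R + 1) * \<bar>x0\<bar>"
        using es k1R by (intro add_mono mult_mono mult_right_mono) auto
      finally show ?thesis unfolding C1_def .
    qed
    have b2: "cmod (l2 - Z) \<le> C2"
    proof -
      have "cmod (l2 - Z) \<le> cmod (1 - \<mu>) * cmod (E b (-s)) * cmod k2 + (cmod (E b (-s)) + 1) * cmod w0"
      proof -
        have a: "cmod (- (1 - \<mu>) * E b (-s) * k2) = cmod (1 - \<mu>) * cmod (E b (-s)) * cmod k2" by (simp add: norm_mult norm_minus_commute)
        have "cmod (E b (-s) - 1) \<le> cmod (E b (-s)) + 1" using norm_triangle_ineq4[of "E b (-s)" 1] by simp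
        then have bb: "cmod ((E b (-s) - 1) * w0) \<le> (cmod (E b (-s)) + 1) * cmod w0" unfolding norm_mult
          by (rule mult_right_mono) simp
        show ?thesis unfolding d2 using a bb norm_triangle_ineq[of "- (1 - \<mu>) * E b (-s) * k2" "(E b (-s) - 1) * w0"]
          by linarith
      qed
      also have "\<dots> \<le> cmod (1 - \<mu>) * exp R * R + (exp R + 1) * cmod w0"
        using Es k2R by (intro add_mono mult_mono mult_right_mono) auto
      finally show ?thesis unfolding C2_def .
    qed
    have "norm ((Y,Z) - (l1,l2)) \<le> C1 + C2"
    proof -
      have "norm ((Y,Z) - (l1,l2)) = norm (Y - l1, Z - l2)" by simp
      also have "\<dots> \<le> norm (Y - l1) + norm (Z - l2)" by (rule norm_Pair_le)
      also have "\<dots> \<le> C1 + C2" using b1 b2 by (simp add: norm_minus_commute abs_minus_commute)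
      finally show ?thesis .
    qed
    then show "\<exists>y z. (0,y,z) \<in> \<Gamma> \<and> norm ((Y,Z) - (y,z)) \<le> C1 + C2" using lG by blast
  qed
qed


lemma norm_tov: "norm (y, Re z, Im z) = norm (y, z)"
  by (simp add: norm_Pair cmod_def)

lemma int_mn:
  assumes lat: "G_lattice b \<Gamma>" and g0: "(t0,x0,w0) \<in> \<Gamma>" and t0: "t0 \<noteq> 0"
  shows "exp t0 + 2 * Re (E b t0) \<in> \<int> \<and> exp (-t0) + 2 * Re (E b (-t0)) \<in> \<int>"
proof -
  have S: "G_subgroup b \<Gamma>" and D: "discrete \<Gamma>" using lat G_lattice_def by auto
  obtain R where R: "\<forall>g. \<exists>\<gamma>\<in>\<Gamma>. norm (G_mult b \<gamma> g) < R" using stepA[OF lat] by blast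
  obtain C where C: "\<forall>Y Z. \<exists>y z. (0,y,z) \<in> \<Gamma> \<and> norm ((Y,Z) - (y,z)) \<le> C"
    using stepB2[OF S R g0 t0] by blast
  define Lv where "Lv = {(y, Re z, Im z) | y z. (0,y,z) \<in> \<Gamma>}"
  have one: "(0,0,0) \<in> \<Gamma>" using sub_one[OF S] G_one_def by simp
  obtain \<epsilon> where e: "\<epsilon> > 0" "\<forall>g\<in>\<Gamma>. dist G_one g < \<epsilon> \<longrightarrow> g = G_one"
    using D sub_one[OF S] unfolding discrete_def isolated_in_dist_Ex_iff by blast
  have L: "lat Lv"
  proof
    have "(0::v3) = (0, Re 0, Im 0)" by (simp add: zero_prod_def)
    then show "0 \<in> Lv" unfolding Lv_def using one by blast
  next
    fix x x' assume "x \<in> Lv" "x' \<in> Lv"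
    then obtain y z y' z' where xx: "x = (y, Re z, Im z)" "(0,y,z) \<in> \<Gamma>" "x' = (y', Re z', Im z')" "(0,y',z') \<in> \<Gamma>"
      unfolding Lv_def by blast
    have "G_mult b (0,y,z) (0,y',z') \<in> \<Gamma>" using S xx by (intro sub_mult)
    then have "(0, y + y', z + z') \<in> \<Gamma>" by simp
    then show "x + x' \<in> Lv" unfolding Lv_def xx by force
  next
    fix x assume "x \<in> Lv"
    then obtain y z where xx: "x = (y, Re z, Im z)" "(0,y,z) \<in> \<Gamma>" unfolding Lv_def by blast
    have "G_inv b (0,y,z) \<in> \<Gamma>" using S xx by (intro sub_inv)
    then have "(0, -y, -z) \<in> \<Gamma>" by simp
    then show "- x \<in> Lv" unfolding Lv_def xx by force
  next
    show "\<exists>\<epsilon>>0. \<forall>x\<in>Lv. x \<noteq> 0 \<longrightarrow> \<epsilon> \<le> norm x"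
    proof (intro exI conjI ballI impI)
      show "\<epsilon> > 0" by fact
      fix x assume "x \<in> Lv" "x \<noteq> 0"
      then obtain y z where xx: "x = (y, Re z, Im z)" "(0,y,z) \<in> \<Gamma>" unfolding Lv_def by blast
      have "(0,y,z) \<noteq> G_one" using xx \<open>x \<noteq> 0\<close> by (auto simp: G_one_def complex_eq_iff zero_prod_def)
      then have "\<not> dist G_one (0,y,z) < \<epsilon>" using e xx by blast
      moreover have "dist G_one (0,y,z) = norm x" unfolding xx norm_tov G_one_def
        by (simp add: dist_norm norm_Pair)
      ultimately show "\<epsilon> \<le> norm x" by simp
    qed
  next
    show "\<exists>C. \<forall>y. \<exists>x\<in>Lv. norm (y - x) \<le> C"
    proof (intro exI allI)
      fix v :: v3
      obtain Y a a' where v: "v = (Y, a, a')" by (cases v) auto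
      obtain y z where yz: "(0,y,z) \<in> \<Gamma>" "norm ((Y, Complex a a') - (y,z)) \<le> C" using C by blast
      have "norm (v - (y, Re z, Im z)) = norm ((Y, Complex a a') - (y,z))"
        unfolding v using norm_tov[of "Y - y" "Complex a a' - z"] by simp
      then show "\<exists>x\<in>Lv. norm (v - x) \<le> C" using yz unfolding Lv_def by force
    qed
  qed
  have conjL: "Tm (exp t) (Re (E b t)) (Im (E b t)) x \<in> Lv" if tG: "(t,x1,w1) \<in> \<Gamma>" and xL: "x \<in> Lv" for t x1 w1 x
  proof -
    obtain y z where xx: "x = (y, Re z, Im z)" "(0,y,z) \<in> \<Gamma>" using xL unfolding Lv_def by blast
    have "G_mult b (G_mult b (t,x1,w1) (0,y,z)) (G_inv b (t,x1,w1)) \<in> \<Gamma>"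
      using S tG xx by (intro sub_mult sub_inv)
    then have "(0, exp t * y, E b t * z) \<in> \<Gamma>" by (simp only: conj_N)
    then show ?thesis unfolding Lv_def xx Tm_def by force
  qed
  have i1: "exp t0 + 2 * Re (E b t0) \<in> \<int>"
    using lat.trace_int[OF L, of "exp t0" "Re (E b t0)" "Im (E b t0)"] conjL[OF g0] by blast
  have "G_inv b (t0,x0,w0) \<in> \<Gamma>" using S g0 by (rule sub_inv)
  then have g1: "(-t0, - exp (-t0) * x0, - E b (-t0) * w0) \<in> \<Gamma>" by simp
  have i2: "exp (-t0) + 2 * Re (E b (-t0)) \<in> \<int>"
    using lat.trace_int[OF L, of "exp (-t0)" "Re (E b (-t0))" "Im (E b (-t0))"] conjL[OF g1] by blast
  show ?thesis using i1 i2 by blast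
qed


lemma rat_root:
  fixes x :: real and m n :: int
  assumes "x \<in> \<rat>" "x^3 - of_int m * x^2 + of_int n * x - 1 = 0"
  shows "x = 1 \<or> x = -1"
proof -
  obtain p q :: int where pq: "q > 0" "coprime p q" "x = of_int p / of_int q"
    using Rats_cases'[OF assms(1)] by blast
  have "(of_int p / of_int q)^3 - of_int m * (of_int p / of_int q)^2 + of_int n * (of_int p / of_int q) - 1 = (0::real)"
    using assms(2) pq(3) by simp
  then have "(of_int (p^3 - m * p^2 * q + n * p * q^2 - q^3) :: real) = 0"
    using pq(1) by (simp add: field_simps power2_eq_square power3_eq_cube)
  then have eq: "p^3 - m * p^2 * q + n * p * q^2 - q^3 = 0" by (simp only: of_int_eq_0_iff)
  have "q dvd p^3"
  proof -
    have "p^3 = q * (m * p^2 - n * p * q + q^2)" using eq by (simp add: algebra_simps power2_eq_square power3_eq_cube)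
    then show ?thesis by simp
  qed
  moreover have "coprime q (p^3)" using pq(2) by (simp add: coprime_commute)
  ultimately have "is_unit q" using coprime_absorb_left[of q "p^3"] by blast
  then have q1: "q = 1" using pq(1) by simp
  have "p dvd q^3"
  proof -
    have "q^3 = p * (p^2 - m * p * q + n * q^2)" using eq by (simp add: algebra_simps power2_eq_square power3_eq_cube)
    then show ?thesis by simp
  qed
  then have "p dvd 1" using q1 by simp
  then have "p = 1 \<or> p = -1" by auto
  then show ?thesis using pq(3) q1 by auto
qed

lemma real_double_root:
  fixes c r :: real and m n :: int
  assumes c: "c * r^2 = 1" and m: "of_int m = c + 2*r" and n: "of_int n = r^2 + 2*c*r"
  shows "c = 1"
proof -
  have key: "r * (6 * of_int n - 2 * (of_int m)^2) = 9 - of_int m * of_int n"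
  proof -
    have "r * (6 * (r^2 + 2*c*r) - 2 * (c + 2*r)^2) - (9 - (c + 2*r) * (r^2 + 2*c*r)) = 9 * (c * r^2 - 1)"
      by (simp add: algebra_simps power2_eq_square power3_eq_cube)
    then show ?thesis using c m n by simp
  qed
  have rroot: "r^3 - of_int m * r^2 + of_int n * r - 1 = 0"
  proof -
    have "r^3 - (c + 2*r) * r^2 + (r^2 + 2*c*r) * r - 1 = c * r^2 - 1"
      by (simp add: algebra_simps power2_eq_square power3_eq_cube)
    then show ?thesis using c m n by simp
  qed
  have croot: "c^3 - of_int m * c^2 + of_int n * c - 1 = 0"
  proof -
    have "c^3 - (c + 2*r) * c^2 + (r^2 + 2*c*r) * c - 1 = c * r^2 - 1"
      by (simp add: algebra_simps power2_eq_square power3_eq_cube)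
    then show ?thesis using c m n by simp
  qed
  show ?thesis
  proof (cases "6 * n - 2 * m^2 = 0")
    case False
    then have "(of_int (6 * n - 2 * m^2) :: real) \<noteq> 0" by (simp only: of_int_eq_0_iff) simp
    then have ne: "6 * of_int n - 2 * (of_int m)^2 \<noteq> (0::real)" by simp
    then have "r = (9 - of_int m * of_int n) / (6 * of_int n - 2 * (of_int m)^2)"
      using key by (simp add: field_simps)
    then have "r \<in> \<rat>" by simp
    then have "r = 1 \<or> r = -1" using rat_root rroot by blast
    then have "r^2 = 1" by auto
    then show ?thesis using c by simp
  next
    case True
    then have "(of_int (6 * n - 2 * m^2) :: real) = 0" by (simp only: of_int_0)
    then have "6 * of_int n - 2 * (of_int m)^2 = (0::real)" by simp
    then have "9 - of_int m * of_int n = (0::real)" using key by (metis mult_zero_right)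
    then have "of_int (m * n) = (of_int 9 :: real)" by simp
    then have mn: "m * n = 9" by (simp only: of_int_eq_iff)
    have m2: "m^2 = 3 * n" using True by simp
    have "m^3 = 27"
    proof -
      have "m^3 = m * m^2" by (simp add: power2_eq_square power3_eq_cube)
      also have "\<dots> = 3 * (m * n)" using m2 by simp
      finally show ?thesis using mn by simp
    qed
    then have m3: "m = 3"
    proof -
      have "(m - 3) * (m^2 + 3*m + 9) = m^3 - 27" by (simp add: algebra_simps power2_eq_square power3_eq_cube)
      then have z: "(m - 3) * (m^2 + 3*m + 9) = 0" using \<open>m^3 = 27\<close> by simp
      have "4*(m^2+3*m+9) = (2*m+3)^2 + 27" by (simp add: algebra_simps power2_eq_square)
      moreover have "(2*m+3)^2 \<ge> 0" by simp
      ultimately have "4*(m^2+3*m+9) \<ge> 27" by linarith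
      then have "m^2 + 3*m + 9 \<noteq> 0" by auto
      then show ?thesis using z by simp
    qed
    then have n3: "n = 3" using m2 by simp
    have "(c - 1)^3 = 0" using croot m3 n3 by (simp add: algebra_simps power2_eq_square power3_eq_cube)
    then show ?thesis by simp
  qed
qed


lemma factor_poly:
  fixes c :: real and \<mu> :: complex and m n :: int
  assumes cm: "c * (cmod \<mu>)^2 = 1" and m: "of_int m = c + 2 * Re \<mu>"
    and n: "of_int n = (cmod \<mu>)^2 + 2 * c * Re \<mu>"
  shows "fmn m n x = (x - of_real c) * (x - \<mu>) * (x - cnj \<mu>)"
proof -
  have s: "\<mu> + cnj \<mu> = of_real (2 * Re \<mu>)" by (rule complex_add_cnj)
  have p: "\<mu> * cnj \<mu> = of_real ((cmod \<mu>)^2)" by (rule complex_norm_square[symmetric])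
  have "(x - of_real c) * (x - \<mu>) * (x - cnj \<mu>)
     = x^3 - (of_real c + (\<mu> + cnj \<mu>)) * x^2 + (of_real c * (\<mu> + cnj \<mu>) + \<mu> * cnj \<mu>) * x - of_real c * (\<mu> * cnj \<mu>)"
    by (simp add: algebra_simps power2_eq_square power3_eq_cube)
  also have "\<dots> = x^3 - of_real (c + 2 * Re \<mu>) * x^2 + of_real ((cmod \<mu>)^2 + 2 * c * Re \<mu>) * x - of_real (c * (cmod \<mu>)^2)"
    unfolding s p by (simp add: algebra_simps)
  also have "\<dots> = fmn m n x" unfolding fmn_def cm
    by (metis m n of_real_1 of_real_of_int_eq)
  finally show ?thesis by simp
qed

lemma exp_i_eq:
  assumes "exp (\<i> * complex_of_real x) = exp (\<i> * complex_of_real y)"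
  shows "\<exists>k::int. x = y + 2 * of_int k * pi"
proof -
  obtain k :: int where "\<i> * complex_of_real x = \<i> * complex_of_real y + (of_int (2 * k) * pi) * \<i>"
    using assms exp_eq by blast
  then have "Im (\<i> * complex_of_real x) = Im (\<i> * complex_of_real y + (of_int (2 * k) * pi) * \<i>)" by simp
  then have "x = y + 2 * of_int k * pi" by simp
  then show ?thesis by blast
qed

lemma roots:
  assumes f: "\<And>x. fmn m n x = (x - of_real c) * (x - \<alpha>) * (x - cnj \<alpha>)" and a: "Im \<alpha> > 0"
  shows "real_root m n = c" "upper_root m n = \<alpha>" "phi_mn m n = Arg \<alpha>"
proof -
  show rr: "real_root m n = c" unfolding real_root_def
  proof (rule the_equality)
    show "fmn m n (complex_of_real c) = 0" using f by simp
    fix c' assume "fmn m n (complex_of_real c') = 0"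
    then have "complex_of_real c' = of_real c \<or> complex_of_real c' = \<alpha> \<or> complex_of_real c' = cnj \<alpha>"
      using f by simp
    moreover have "complex_of_real c' \<noteq> \<alpha>" "complex_of_real c' \<noteq> cnj \<alpha>" using a
      by (auto simp: complex_eq_iff)
    ultimately show "c' = c" by simp
  qed
  show ur: "upper_root m n = \<alpha>" unfolding upper_root_def
  proof (rule the_equality)
    show "Im \<alpha> > 0 \<and> fmn m n \<alpha> = 0" using f a by simp
    fix \<beta> assume "Im \<beta> > 0 \<and> fmn m n \<beta> = 0"
    then have b: "Im \<beta> > 0" "\<beta> = of_real c \<or> \<beta> = \<alpha> \<or> \<beta> = cnj \<alpha>" using f by auto
    then show "\<beta> = \<alpha>" using a by auto
  qed
  have a0: "\<alpha> \<noteq> 0" using a by auto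
  show "phi_mn m n = Arg \<alpha>" unfolding phi_mn_def ur
  proof (rule the_equality)
    show "0 < Arg \<alpha> \<and> Arg \<alpha> < pi \<and> \<alpha> = complex_of_real (cmod \<alpha>) * exp (\<i> * complex_of_real (Arg \<alpha>))"
      using Arg_lt_pi a Arg_eq[OF a0] by blast
    fix \<phi> assume ph: "0 < \<phi> \<and> \<phi> < pi \<and> \<alpha> = complex_of_real (cmod \<alpha>) * exp (\<i> * complex_of_real \<phi>)"
    have "complex_of_real (cmod \<alpha>) * exp (\<i> * complex_of_real \<phi>) = complex_of_real (cmod \<alpha>) * exp (\<i> * complex_of_real (Arg \<alpha>))"
      using ph Arg_eq[OF a0] by simp
    then have "exp (\<i> * complex_of_real \<phi>) = exp (\<i> * complex_of_real (Arg \<alpha>))" using a0 by simp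
    then obtain k :: int where k: "\<phi> = Arg \<alpha> + 2 * of_int k * pi" using exp_i_eq by blast
    have A: "0 < Arg \<alpha>" "Arg \<alpha> < pi" using Arg_lt_pi a by auto
    have "\<bar>2 * of_int k * pi\<bar> < pi" using k ph A by auto
    then have "\<bar>2 * of_int k\<bar> < (1::real)" using pi_gt_zero by (simp add: abs_mult)
    then have "k = 0" by linarith
    then show "\<phi> = Arg \<alpha>" using k by simp
  qed
qed

lemma not_excl:
  assumes f: "\<And>x. fmn m n x = (x - of_real c) * (x - \<alpha>) * (x - cnj \<alpha>)" and a: "Im \<alpha> \<noteq> 0" and c: "c \<noteq> 1"
  shows "(m, n) \<notin> {(0,0),(1,1),(2,2)}"
proof
  assume "(m, n) \<in> {(0,0),(1,1),(2,2)}"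
  then have "m = n" by auto
  then have "fmn m n 1 = 0" unfolding fmn_def by simp
  then have "(1 - of_real c) * (1 - \<alpha>) * (1 - cnj \<alpha>) = 0" using f by simp
  moreover have "1 - \<alpha> \<noteq> 0" "1 - cnj \<alpha> \<noteq> 0" using a by (auto simp: complex_eq_iff)
  moreover have "1 - complex_of_real c \<noteq> 0" using c by (metis eq_iff_diff_eq_0 of_real_eq_1_iff)
  ultimately show False by simp
qed


lemma cmodE_sq: "(cmod (E b t))^2 = exp (-t)"
proof -
  have "(cmod (E b t))^2 = exp (-t/2) * exp (-t/2)" by (simp add: norm_E power2_eq_square)
  also have "\<dots> = exp (-t)" by (simp flip: exp_add)
  finally show ?thesis .
qed

lemma E_neg_inv: "E b (-t) = inverse (E b t)"
  using E_neg[of b t] by (simp add: field_simps E_nonzero)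

lemma Re_inv: "Re (inverse z) = Re z / (cmod z)^2"
  by (simp add: cmod_power2)

lemma Im_inv: "Im (inverse z) = - Im z / (cmod z)^2"
  by (simp add: cmod_power2)

lemma core:
  assumes lat: "G_lattice b \<Gamma>" and g: "(t1,x1,w1) \<in> \<Gamma>" and t1: "t1 \<noteq> 0" and im: "Im (E b t1) > 0"
  shows "b \<in> (\<Union>k::int. h k ` Sigma')"
proof -
  define c where "c = exp t1"
  define \<mu> where "\<mu> = E b t1"
  obtain m n :: int where m: "of_int m = exp t1 + 2 * Re (E b t1)" and n: "of_int n = exp (-t1) + 2 * Re (E b (-t1))"
    using int_mn[OF lat g t1] by (metis Ints_cases)
  have sq: "(cmod \<mu>)^2 = exp (-t1)" unfolding \<mu>_def by (rule cmodE_sq)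
  have cm: "c * (cmod \<mu>)^2 = 1" unfolding sq c_def by (simp flip: exp_add)
  have m': "of_int m = c + 2 * Re \<mu>" using m c_def \<mu>_def by simp
  have "Re (E b (-t1)) = Re \<mu> / (cmod \<mu>)^2" unfolding E_neg_inv \<mu>_def by (rule Re_inv)
  also have "\<dots> = c * Re \<mu>"
  proof -
    have X: "(cmod \<mu>)^2 \<noteq> 0" using cm by auto
    then have "c = 1 / (cmod \<mu>)^2" using cm by (simp add: field_simps)
    then show ?thesis by simp
  qed
  finally have n': "of_int n = (cmod \<mu>)^2 + 2 * c * Re \<mu>" using n sq by simp
  have f: "\<And>x. fmn m n x = (x - of_real c) * (x - \<mu>) * (x - cnj \<mu>)"
    using factor_poly[OF cm m' n'] by blast
  have imu: "Im \<mu> > 0" using im \<mu>_def by simp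
  have c1: "c \<noteq> 1" using t1 c_def by simp
  have "(m, n) \<in> Sigma" unfolding Sigma_def using f imu
    by (simp only: mem_Collect_eq case_prod_conv) (intro exI[of _ c] exI[of _ \<mu>], auto)
  moreover have "(m, n) \<notin> {(0,0),(1,1),(2,2)}" using not_excl[OF f _ c1] imu by simp
  ultimately have mnS: "(m, n) \<in> Sigma'" unfolding Sigma'_def by simp
  have R: "real_root m n = c" "phi_mn m n = Arg \<mu>" using roots[OF f imu] by auto
  have mu0: "\<mu> \<noteq> 0" using imu by auto
  have e1: "\<mu> = exp (complex_of_real (-t1/2)) * exp (\<i> * complex_of_real (t1 * b))"
  proof -
    have "complex_of_real t1 * Complex (-1/2) b = complex_of_real (-t1/2) + \<i> * complex_of_real (t1 * b)"
      by (simp add: complex_eq_iff)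
    then show ?thesis unfolding \<mu>_def E_def by (simp only: exp_add)
  qed
  have e2: "\<mu> = exp (complex_of_real (-t1/2)) * exp (\<i> * complex_of_real (Arg \<mu>))"
  proof -
    have "cmod \<mu> = exp (-t1/2)" unfolding \<mu>_def by (rule norm_E)
    then have "complex_of_real (cmod \<mu>) = exp (complex_of_real (-t1/2))" by (simp only: exp_of_real)
    then show ?thesis using Arg_eq[OF mu0] by simp
  qed
  have "exp (\<i> * complex_of_real (t1 * b)) = exp (\<i> * complex_of_real (Arg \<mu>))"
    using e1 e2 by (metis exp_not_eq_zero mult_cancel_left)
  then obtain k :: int where k: "t1 * b = Arg \<mu> + 2 * of_int k * pi" using exp_i_eq by blast
  have "h k (m, n) = (Arg \<mu> + 2 * of_int k * pi) / ln c" unfolding h_def using R by simp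
  also have "\<dots> = b" using k t1 unfolding c_def by (simp add: field_simps)
  finally show ?thesis using mnS by blast
qed

lemma dir1:
  assumes lat: "G_lattice b \<Gamma>"
  shows "b \<in> (\<Union>k::int. h k ` Sigma')"
proof -
  have S: "G_subgroup b \<Gamma>" using lat G_lattice_def by blast
  obtain R where R: "\<forall>g. \<exists>\<gamma>\<in>\<Gamma>. norm (G_mult b \<gamma> g) < R" using stepA[OF lat] by blast
  obtain \<gamma>0 where g0: "\<gamma>0 \<in> \<Gamma>" "fst \<gamma>0 \<noteq> 0" using stepB1[OF R] by blast
  obtain t0 x0 w0 where gt: "\<gamma>0 = (t0,x0,w0)" by (cases \<gamma>0) auto
  have G0: "(t0,x0,w0) \<in> \<Gamma>" and t0: "t0 \<noteq> 0" using g0 gt by auto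
  define \<mu> where "\<mu> = E b t0"
  have mu0: "\<mu> \<noteq> 0" unfolding \<mu>_def by (rule E_nonzero)
  have Ginv: "(-t0, - exp (-t0) * x0, - E b (-t0) * w0) \<in> \<Gamma>"
    using sub_inv[OF S G0] by simp
  consider "Im \<mu> > 0" | "Im \<mu> < 0" | "Im \<mu> = 0" by linarith
  then show ?thesis
  proof cases
    case 1
    then show ?thesis using core[OF lat G0 t0] \<mu>_def by simp
  next
    case 2
    have "Im (E b (-t0)) > 0" unfolding E_neg_inv Im_inv using 2 mu0 \<mu>_def
      by (simp add: divide_neg_pos)
    then show ?thesis using core[OF lat Ginv] t0 by simp
  next
    case 3
    obtain m n :: int where m: "of_int m = exp t0 + 2 * Re (E b t0)" and n: "of_int n = exp (-t0) + 2 * Re (E b (-t0))"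
      using int_mn[OF lat G0 t0] by (metis Ints_cases)
    define r where "r = Re \<mu>"
    define c where "c = exp t0"
    have sq: "r^2 = exp (-t0)" using cmodE_sq[of b t0] 3 unfolding r_def \<mu>_def by (simp add: cmod_power2)
    have cr: "c * r^2 = 1" unfolding sq c_def by (simp flip: exp_add)
    have r0: "r \<noteq> 0" using cr by auto
    have "Re (E b (-t0)) = r / r^2" unfolding E_neg_inv Re_inv using 3 unfolding r_def \<mu>_def by (simp add: cmod_power2)
    also have "\<dots> = c * r" using cr r0 by (simp add: field_simps power2_eq_square)
    finally have n': "of_int n = r^2 + 2 * c * r" using n sq by simp
    have m': "of_int m = c + 2 * r" using m unfolding c_def r_def \<mu>_def by simp
    have "c = 1" using real_double_root[OF cr m' n'] .
    then show ?thesis using t0 c_def by simp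
  qed
qed


locale constr =
  fixes b c t0 :: real and \<alpha> :: complex and m n :: int
  assumes c0: "c > 0" and c1: "c \<noteq> 1" and ima: "Im \<alpha> > 0"
    and croot: "c^3 = of_int m * c^2 - of_int n * c + 1"
    and aroot: "\<alpha>^3 = of_int m * \<alpha>^2 - of_int n * \<alpha> + 1"
    and t0: "t0 = ln c" and Ea: "E b t0 = \<alpha>"
begin

definition psi :: "v3 \<Rightarrow> real \<times> complex" where
  "psi x = (fst x + fst (snd x) * c + snd (snd x) * c^2,
            of_real (fst x) + of_real (fst (snd x)) * \<alpha> + of_real (snd (snd x)) * \<alpha>^2)"

definition Zset :: "v3 set" where
  "Zset = {x. fst x \<in> \<int> \<and> fst (snd x) \<in> \<int> \<and> snd (snd x) \<in> \<int>}"

definition Lset where "Lset = psi ` Zset"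

definition Gam :: "Gelem set" where
  "Gam = {(of_int j * t0, fst v, snd v) | j v. v \<in> Lset}"

lemma psi_add: "psi (x + y) = psi x + psi y"
  unfolding psi_def by (simp add: algebra_simps)

lemma psi_neg: "psi (- x) = - psi x"
  unfolding psi_def by (simp add: algebra_simps)

lemma psi_scale: "psi (r *\<^sub>R x) = r *\<^sub>R psi x"
  unfolding psi_def by (simp add: algebra_simps scaleR_conv_of_real)

lemma psi_zero: "psi 0 = 0"
  unfolding psi_def by (simp add: zero_prod_def)

lemma linear_psi: "linear psi"
  by (rule linearI) (simp_all add: psi_add psi_scale)

lemma Zset_add: "x \<in> Zset \<Longrightarrow> y \<in> Zset \<Longrightarrow> x + y \<in> Zset"
  unfolding Zset_def by auto
lemma Zset_neg: "x \<in> Zset \<Longrightarrow> - x \<in> Zset"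
  unfolding Zset_def by auto
lemma Zset_zero: "0 \<in> Zset"
  unfolding Zset_def by simp

lemma Lset_add: assumes "v \<in> Lset" "w \<in> Lset" shows "v + w \<in> Lset"
proof -
  obtain x y where "x \<in> Zset" "y \<in> Zset" "v = psi x" "w = psi y" using assms Lset_def by auto
  then have "v + w = psi (x + y)" "x + y \<in> Zset" using psi_add Zset_add by auto
  then show ?thesis unfolding Lset_def by blast
qed
lemma Lset_neg: assumes "v \<in> Lset" shows "- v \<in> Lset"
proof -
  obtain x where "x \<in> Zset" "v = psi x" using assms Lset_def by auto
  then have "- v = psi (- x)" "- x \<in> Zset" using psi_neg Zset_neg by auto
  then show ?thesis unfolding Lset_def by blast
qed
lemma Lset_zero: "0 \<in> Lset"
  unfolding Lset_def using Zset_zero psi_zero by (metis image_eqI)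
lemma Lset_diff: "v \<in> Lset \<Longrightarrow> w \<in> Lset \<Longrightarrow> v - w \<in> Lset"
  using Lset_add Lset_neg by (metis diff_conv_add_uminus)

lemma alpha0: "\<alpha> \<noteq> 0" using ima by auto

lemma T_fwd: assumes "v \<in> Lset" shows "(c * fst v, \<alpha> * snd v) \<in> Lset"
proof -
  obtain x where x: "x \<in> Zset" "v = psi x" using assms Lset_def by auto
  obtain a1 a2 a3 where xa: "x = (a1,a2,a3)" by (cases x) auto
  define x' where "x' = (a3, a1 - a3 * of_int n, a2 + a3 * of_int m)"
  have "x' \<in> Zset" using x(1) xa unfolding Zset_def x'_def by auto
  moreover have "psi x' = (c * fst v, \<alpha> * snd v)"
  proof -
    have e1: "c * (a1 + a2 * c + a3 * c^2) = a3 + (a1 - a3 * of_int n) * c + (a2 + a3 * of_int m) * c^2"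
    proof -
      have "c * (a1 + a2 * c + a3 * c^2) = a1 * c + a2 * c^2 + a3 * c^3" by (simp add: algebra_simps power2_eq_square power3_eq_cube)
      then show ?thesis unfolding croot by (simp add: algebra_simps)
    qed
    have e2: "\<alpha> * (of_real a1 + of_real a2 * \<alpha> + of_real a3 * \<alpha>^2) =
       of_real a3 + of_real (a1 - a3 * of_int n) * \<alpha> + of_real (a2 + a3 * of_int m) * \<alpha>^2"
    proof -
      have "\<alpha> * (of_real a1 + of_real a2 * \<alpha> + of_real a3 * \<alpha>^2) = of_real a1 * \<alpha> + of_real a2 * \<alpha>^2 + of_real a3 * \<alpha>^3"
        by (simp add: algebra_simps power2_eq_square power3_eq_cube)
      then show ?thesis unfolding aroot by (simp add: algebra_simps)
    qed
    show ?thesis unfolding x'_def x(2) xa psi_def using e1 e2 by simp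
  qed
  ultimately show ?thesis unfolding Lset_def by (metis image_eqI)
qed

lemma T_bwd: assumes "v \<in> Lset" shows "(inverse c * fst v, inverse \<alpha> * snd v) \<in> Lset"
proof -
  obtain x where x: "x \<in> Zset" "v = psi x" using assms Lset_def by auto
  obtain a1 a2 a3 where xa: "x = (a1,a2,a3)" by (cases x) auto
  define x' where "x' = (a2 + a1 * of_int n, a3 - a1 * of_int m, a1)"
  have "x' \<in> Zset" using x(1) xa unfolding Zset_def x'_def by auto
  moreover have "psi x' = (inverse c * fst v, inverse \<alpha> * snd v)"
  proof -
    have e1: "c * ((a2 + a1 * of_int n) + (a3 - a1 * of_int m) * c + a1 * c^2) = a1 + a2 * c + a3 * c^2"
    proof -
      have "c * ((a2 + a1 * of_int n) + (a3 - a1 * of_int m) * c + a1 * c^2) =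
        (a2 + a1 * of_int n) * c + (a3 - a1 * of_int m) * c^2 + a1 * c^3"
        by (simp add: algebra_simps power2_eq_square power3_eq_cube)
      then show ?thesis unfolding croot by (simp add: algebra_simps)
    qed
    have e2: "\<alpha> * (of_real (a2 + a1 * of_int n) + of_real (a3 - a1 * of_int m) * \<alpha> + of_real a1 * \<alpha>^2)
        = of_real a1 + of_real a2 * \<alpha> + of_real a3 * \<alpha>^2"
    proof -
      have "\<alpha> * (of_real (a2 + a1 * of_int n) + of_real (a3 - a1 * of_int m) * \<alpha> + of_real a1 * \<alpha>^2) =
         of_real (a2 + a1 * of_int n) * \<alpha> + of_real (a3 - a1 * of_int m) * \<alpha>^2 + of_real a1 * \<alpha>^3"
        by (simp add: algebra_simps power2_eq_square power3_eq_cube)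
      then show ?thesis unfolding aroot by (simp add: algebra_simps)
    qed
    have f1: "(a2 + a1 * of_int n) + (a3 - a1 * of_int m) * c + a1 * c^2 = inverse c * (a1 + a2 * c + a3 * c^2)"
      using e1 c0 by (simp add: field_simps)
    have f2: "of_real (a2 + a1 * of_int n) + of_real (a3 - a1 * of_int m) * \<alpha> + of_real a1 * \<alpha>^2
        = inverse \<alpha> * (of_real a1 + of_real a2 * \<alpha> + of_real a3 * \<alpha>^2)"
      using e2 alpha0 by (simp add: field_simps)
    show ?thesis unfolding x'_def x(2) xa psi_def using f1 f2 by simp
  qed
  ultimately show ?thesis unfolding Lset_def by (metis image_eqI)
qed

lemma T_pow: "v \<in> Lset \<Longrightarrow> (c^N * fst v, \<alpha>^N * snd v) \<in> Lset"
proof (induction N arbitrary: v)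
  case 0
  then show ?case by simp
next
  case (Suc N)
  have "(c * fst v, \<alpha> * snd v) \<in> Lset" using T_fwd Suc.prems by blast
  from Suc.IH[OF this] show ?case by (simp add: mult_ac)
qed

lemma Tinv_pow: "v \<in> Lset \<Longrightarrow> (inverse c^N * fst v, inverse \<alpha>^N * snd v) \<in> Lset"
proof (induction N arbitrary: v)
  case 0
  then show ?case by simp
next
  case (Suc N)
  have "(inverse c * fst v, inverse \<alpha> * snd v) \<in> Lset" using T_bwd Suc.prems by blast
  from Suc.IH[OF this] show ?case by (simp add: mult_ac)
qed

lemma exp_t0: "exp t0 = c" using t0 c0 by simp

lemma T_int: assumes "v \<in> Lset" shows "(exp (of_int j * t0) * fst v, E b (of_int j * t0) * snd v) \<in> Lset"
proof -
  have e1: "exp (of_int j * t0) = c powi j" by (simp add: exp_power_int[symmetric] exp_t0)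
  have "E b (of_int j * t0) = exp (of_int j * (complex_of_real t0 * Complex (-1/2) b))"
    unfolding E_def by (simp add: mult.assoc)
  also have "\<dots> = \<alpha> powi j" using Ea unfolding E_def by (simp add: exp_power_int[symmetric])
  finally have e2: "E b (of_int j * t0) = \<alpha> powi j" .
  show ?thesis
  proof (cases "j \<ge> 0")
    case True
    then show ?thesis unfolding e1 e2 power_int_def using T_pow[OF assms] by simp
  next
    case False
    then show ?thesis unfolding e1 e2 power_int_def using Tinv_pow[OF assms] by simp
  qed
qed

end


context constr begin

lemma t0ne: "t0 \<noteq> 0" using t0 c0 c1 by (metis exp_t0 exp_zero)

lemma GamI: "v \<in> Lset \<Longrightarrow> (of_int j * t0, fst v, snd v) \<in> Gam"
  unfolding Gam_def by blast

lemma GamE: assumes "g \<in> Gam" obtains j v where "v \<in> Lset" "g = (of_int j * t0, fst v, snd v)"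
  using assms unfolding Gam_def by blast

lemma Gam_sub: "G_subgroup b Gam"
  unfolding G_subgroup_def
proof (intro conjI ballI)
  show "G_one \<in> Gam" using GamI[OF Lset_zero, of 0] by (simp add: G_one_def)
next
  fix g g' assume "g \<in> Gam" "g' \<in> Gam"
  then obtain j v j' v' where jv: "v \<in> Lset" "g = (of_int j * t0, fst v, snd v)"
    "v' \<in> Lset" "g' = (of_int j' * t0, fst v', snd v')" by (metis GamE)
  have "(exp (of_int j * t0) * fst v', E b (of_int j * t0) * snd v') \<in> Lset" using T_int jv(3) by blast
  then have "v + (exp (of_int j * t0) * fst v', E b (of_int j * t0) * snd v') \<in> Lset" using Lset_add jv(1) by blast
  from GamI[OF this, of "j + j'"]
  have "(of_int (j + j') * t0, fst v + exp (of_int j * t0) * fst v', snd v + E b (of_int j * t0) * snd v') \<in> Gam"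
    by simp
  then show "G_mult b g g' \<in> Gam" unfolding jv by (cases v; cases v') (simp add: algebra_simps)
next
  fix g assume "g \<in> Gam"
  then obtain j v where jv: "v \<in> Lset" "g = (of_int j * t0, fst v, snd v)" by (metis GamE)
  have "(exp (of_int (-j) * t0) * fst v, E b (of_int (-j) * t0) * snd v) \<in> Lset" using T_int jv(1) by blast
  then have "- (exp (of_int (-j) * t0) * fst v, E b (of_int (-j) * t0) * snd v) \<in> Lset" using Lset_neg by blast
  from GamI[OF this, of "-j"]
  have "(of_int (-j) * t0, - (exp (of_int (-j) * t0) * fst v), - (E b (of_int (-j) * t0) * snd v)) \<in> Gam"
    by simp
  then show "G_inv b g \<in> Gam" unfolding jv by (cases v) simp
qed

lemma psi_inj0: assumes "psi x = 0" shows "x = 0"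
proof -
  obtain a1 a2 a3 where xa: "x = (a1,a2,a3)" by (cases x) auto
  have e1: "a1 + a2 * c + a3 * c^2 = 0" and e2: "of_real a1 + of_real a2 * \<alpha> + of_real a3 * \<alpha>^2 = (0::complex)"
    using assms unfolding psi_def xa by (simp_all add: zero_prod_def)
  define p where "p = Re \<alpha>"
  define q where "q = Im \<alpha>"
  have q0: "q \<noteq> 0" using ima q_def by simp
  have "Im (of_real a1 + of_real a2 * \<alpha> + of_real a3 * \<alpha>^2) = 0" using e2 by simp
  then have "q * (a2 + 2 * a3 * p) = 0" unfolding p_def q_def by (simp add: power2_eq_square algebra_simps)
  then have i: "a2 = - 2 * a3 * p" using q0 by simp
  have "Re (of_real a1 + of_real a2 * \<alpha> + of_real a3 * \<alpha>^2) = 0" using e2 by simp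
  then have r: "a1 + a2 * p + a3 * (p^2 - q^2) = 0" unfolding p_def q_def by (simp add: power2_eq_square algebra_simps)
  have "a3 * (- ((p - c)^2 + q^2)) = 0"
  proof -
    have "a3 * (- ((p - c)^2 + q^2)) = (a1 + a2 * p + a3 * (p^2 - q^2)) - (a1 + a2 * c + a3 * c^2)"
      unfolding i by (simp add: algebra_simps power2_eq_square)
    then show ?thesis using r e1 by simp
  qed
  moreover have "(p - c)^2 + q^2 > 0" using q0 by (simp add: add_nonneg_pos)
  ultimately have "a3 = 0" by simp
  then have "a2 = 0" "a1 = 0" using i e1 by auto
  then show ?thesis using xa \<open>a3 = 0\<close> by (simp add: zero_prod_def)
qed

lemma inj_psi: "inj psi"
  using linear_psi psi_inj0 by (simp add: linear_injective_0)

lemma Zset_norm: assumes "x \<in> Zset" "x \<noteq> 0" shows "norm x \<ge> 1"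
proof -
  obtain a1 a2 a3 where xa: "x = (a1,a2,a3)" by (cases x) auto
  have I: "a1 \<in> \<int>" "a2 \<in> \<int>" "a3 \<in> \<int>" using assms(1) unfolding xa Zset_def by auto
  have "a1 \<noteq> 0 \<or> a2 \<noteq> 0 \<or> a3 \<noteq> 0" using assms(2) xa by (auto simp: zero_prod_def)
  then have "\<bar>a1\<bar> \<ge> 1 \<or> \<bar>a2\<bar> \<ge> 1 \<or> \<bar>a3\<bar> \<ge> 1" using I
    using Ints_nonzero_abs_ge1 by blast
  then show ?thesis using comp_bounds[of x] xa by auto
qed


lemma Lset_norm: assumes "v \<in> Lset" "v \<noteq> 0" "\<And>x. B * norm x \<le> norm (psi x)" "B > 0"
  shows "B \<le> norm v"
proof -
  obtain x where x: "x \<in> Zset" "v = psi x" using assms(1) Lset_def by auto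
  have "x \<noteq> 0" using x assms(2) psi_zero by auto
  then have "norm x \<ge> 1" using Zset_norm x(1) by blast
  then have "B \<le> B * norm x" using assms(4) by simp
  also have "\<dots> \<le> norm v" using assms(3) x(2) by simp
  finally show ?thesis .
qed

lemma Gam_disc: "discrete Gam"
proof -
  obtain B where B: "B > 0" "\<And>x. B * norm x \<le> norm (psi x)"
    using linear_inj_bounded_below_pos[OF linear_psi inj_psi] by blast
  define e where "e = min \<bar>t0\<bar> B"
  have e0: "e > 0" unfolding e_def using B t0ne by simp
  have "uniform_discrete Gam"
  proof (rule uniformI1[OF e0])
    fix g g' assume g: "g \<in> Gam" "g' \<in> Gam" "dist g g' < e"
    obtain j v where jv: "v \<in> Lset" "g = (of_int j * t0, v)" using g(1) by (metis GamE prod.collapse)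
    obtain j' v' where jv': "v' \<in> Lset" "g' = (of_int j' * t0, v')" using g(2) by (metis GamE prod.collapse)
    have dn: "dist g g' = norm (of_int j * t0 - of_int j' * t0, v - v')" unfolding jv jv' dist_norm by simp
    have "\<bar>of_int j * t0 - of_int j' * t0\<bar> < \<bar>t0\<bar>"
      using norm_fst_le[of "of_int j * t0 - of_int j' * t0" "v - v'"] g(3) dn e_def by simp
    then have "\<bar>of_int (j - j')\<bar> * \<bar>t0\<bar> < 1 * \<bar>t0\<bar>" by (simp add: abs_mult[symmetric] algebra_simps)
    then have "\<bar>of_int (j - j')\<bar> < (1::real)" using t0ne by (simp only: mult_less_cancel_right)
    then have jj: "j = j'" by linarith
    have "norm (v - v') < B"
      using norm_snd_le[of "v - v'" "of_int j * t0 - of_int j' * t0"] g(3) dn e_def by simp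
    then have "v - v' = 0" using Lset_norm[OF Lset_diff[OF jv(1) jv'(1)] _ B(2) B(1)] by force
    then show "g = g'" using jv jv' jj by simp
  qed
  then show ?thesis by (rule uniform_discrete_imp_discrete)
qed

definition tov :: "real \<times> complex \<Rightarrow> v3" where "tov w = (fst w, Re (snd w), Im (snd w))"

lemma linear_tov: "linear tov"
  by (rule linearI) (simp_all add: tov_def)

lemma surj_psi: "\<exists>r. psi r = w"
proof -
  have lin: "linear (tov \<circ> psi)" using linear_tov linear_psi by (rule linear_compose[rotated])
  have "inj tov" unfolding tov_def inj_def by (auto simp: complex_eq_iff prod_eq_iff)
  then have "inj (tov \<circ> psi)" using inj_psi by (simp add: inj_compose)
  then have "surj (tov \<circ> psi)" using lin linear_injective_imp_surjective by blast
  then obtain r where "(tov \<circ> psi) r = tov w" by (metis surjD)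
  then have "psi r = w" using \<open>inj tov\<close> by (simp add: inj_eq)
  then show ?thesis by blast
qed

end

lemma lattice_of_cover:
  assumes S: "G_subgroup b \<Gamma>" and D: "discrete \<Gamma>" and K: "compact K"
    and cov: "\<And>g. \<exists>\<gamma>\<in>\<Gamma>. G_mult b \<gamma> g \<in> K"
  shows "G_lattice b \<Gamma>"
proof -
  define f where "f = G_rcoset b \<Gamma>"
  define P where "P U \<longleftrightarrow> U \<subseteq> range f \<and> open {x. f x \<in> U}" for U
  have isP: "istopology P" unfolding istopology_def P_def
  proof (rule conjI; intro allI impI)
    fix S T assume "S \<subseteq> range f \<and> open {x. f x \<in> S}" "T \<subseteq> range f \<and> open {x. f x \<in> T}"
    moreover have "{x. f x \<in> S \<inter> T} = {x. f x \<in> S} \<inter> {x. f x \<in> T}" by auto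
    ultimately show "S \<inter> T \<subseteq> range f \<and> open {x. f x \<in> S \<inter> T}" by auto
  next
    fix \<K> assume k: "\<forall>K\<in>\<K>. K \<subseteq> range f \<and> open {x. f x \<in> K}"
    have "{x. f x \<in> \<Union>\<K>} = (\<Union>K\<in>\<K>. {x. f x \<in> K})" by auto
    then show "\<Union>\<K> \<subseteq> range f \<and> open {x. f x \<in> \<Union>\<K>}" using k by auto
  qed
  define Q where "Q = topology P"
  have opQ: "openin Q = P" unfolding Q_def using isP by simp
  have top: "topspace Q = range f"
  proof
    show "topspace Q \<subseteq> range f" unfolding topspace_def opQ P_def by auto
    have "P (range f)" unfolding P_def by simp
    then show "range f \<subseteq> topspace Q" using opQ openin_subset by metis
  qed
  have qm: "quotient_map euclidean Q f"
    unfolding quotient_map_def top opQ P_def by auto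
  have "compactin Q (f ` K)"
    using image_compactin[OF _ quotient_imp_continuous_map[OF qm]] K by simp
  moreover have "f ` K = topspace Q"
  proof
    show "f ` K \<subseteq> topspace Q" unfolding top by auto
    show "topspace Q \<subseteq> f ` K"
    proof
      fix y assume "y \<in> topspace Q"
      then obtain g where y: "y = f g" using top by auto
      obtain \<gamma> where "\<gamma> \<in> \<Gamma>" "G_mult b \<gamma> g \<in> K" using cov by blast
      moreover have "f (G_mult b \<gamma> g) = f g" unfolding f_def using coset_eq[OF S] \<open>\<gamma> \<in> \<Gamma>\<close> by metis
      ultimately show "y \<in> f ` K" using y by (metis image_eqI)
    qed
  qed
  ultimately have "compact_space Q" unfolding compact_space_def by simp
  then show ?thesis unfolding G_lattice_def using S D qm f_def by blast
qed


context constr begin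

definition Kset :: "Gelem set" where
  "Kset = (\<lambda>p. (fst p, psi (snd p))) ` ({-\<bar>t0\<bar>..\<bar>t0\<bar>} \<times> ({0..1} \<times> {0..1} \<times> {0..1}))"

lemma compact_K: "compact Kset"
  unfolding Kset_def
proof (rule compact_continuous_image)
  show "compact ({-\<bar>t0\<bar>..\<bar>t0\<bar>} \<times> ({0..1::real} \<times> {0..1::real} \<times> {0..1::real}))"
    by (intro compact_Times compact_Icc)
  show "continuous_on ({-\<bar>t0\<bar>..\<bar>t0\<bar>} \<times> ({0..1} \<times> {0..1} \<times> {0..1})) (\<lambda>p. (fst p, psi (snd p)))"
    unfolding psi_def by (intro continuous_intros)
qed

lemma cover: "\<exists>\<gamma>\<in>Gam. G_mult b \<gamma> g \<in> Kset"
proof -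
  obtain s y z where g: "g = (s,y,z)" by (cases g) auto
  define j where "j = - \<lfloor>s / t0\<rfloor>"
  define \<gamma>1 where "\<gamma>1 = (of_int j * t0, (0::real), (0::complex))"
  have g1: "\<gamma>1 \<in> Gam" using GamI[OF Lset_zero, of j] unfolding \<gamma>1_def by simp
  define s' where "s' = of_int j * t0 + s"
  have s'b: "\<bar>s'\<bar> \<le> \<bar>t0\<bar>"
  proof -
    have "s' = t0 * (s / t0 - of_int \<lfloor>s / t0\<rfloor>)" unfolding s'_def j_def using t0ne by (simp add: field_simps)
    moreover have "0 \<le> s / t0 - of_int \<lfloor>s / t0\<rfloor>" "s / t0 - of_int \<lfloor>s / t0\<rfloor> \<le> 1"
      by (simp_all add: of_int_floor_le) (smt (verit) real_of_int_floor_add_one_gt)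
    ultimately show ?thesis by (simp add: abs_mult mult_left_le)
  qed
  obtain r where r: "psi r = (exp (of_int j * t0) * y, E b (of_int j * t0) * z)" using surj_psi by blast
  obtain r1 r2 r3 where rr: "r = (r1,r2,r3)" by (cases r) auto
  define q :: v3 where "q = (- of_int \<lfloor>r1\<rfloor>, - of_int \<lfloor>r2\<rfloor>, - of_int \<lfloor>r3\<rfloor>)"
  have qZ: "q \<in> Zset" unfolding q_def Zset_def by simp
  define \<gamma>2 where "\<gamma>2 = (of_int 0 * t0, fst (psi q), snd (psi q))"
  have g2: "\<gamma>2 \<in> Gam" unfolding \<gamma>2_def using qZ Lset_def by (intro GamI) auto
  have "G_mult b \<gamma>1 g = (s', exp (of_int j * t0) * y, E b (of_int j * t0) * z)"
    unfolding \<gamma>1_def g s'_def by simp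
  then have "G_mult b \<gamma>1 g = (s', psi r)" using r by simp
  then have "G_mult b \<gamma>2 (G_mult b \<gamma>1 g) = (s', psi q + psi r)"
    unfolding \<gamma>2_def by (cases "psi q"; cases "psi r") simp
  also have "\<dots> = (s', psi (q + r))" by (simp add: psi_add)
  finally have eq: "G_mult b (G_mult b \<gamma>2 \<gamma>1) g = (s', psi (q + r))" by (simp add: G_assoc)
  have box: "q + r \<in> {0..1} \<times> {0..1} \<times> {0..1}"
    unfolding q_def rr by (simp add: of_int_floor_le) (smt (verit) real_of_int_floor_add_one_gt)
  have "(s', psi (q + r)) \<in> Kset" unfolding Kset_def using s'b box
    by (intro image_eqI[of _ _ "(s', q + r)"]) auto
  moreover have "G_mult b \<gamma>2 \<gamma>1 \<in> Gam" using Gam_sub g1 g2 sub_mult by blast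
  ultimately show ?thesis using eq by metis
qed

lemma Gam_lattice: "G_lattice b Gam"
  using lattice_of_cover[OF Gam_sub Gam_disc compact_K] cover by blast

end


lemma E_decomp: "E b t = exp (complex_of_real (-t/2)) * exp (\<i> * complex_of_real (t * b))"
proof -
  have "complex_of_real t * Complex (-1/2) b = complex_of_real (-t/2) + \<i> * complex_of_real (t * b)"
    by (simp add: complex_eq_iff)
  then show ?thesis unfolding E_def by (simp only: exp_add)
qed

lemma dir2:
  assumes "b \<in> (\<Union>k::int. h k ` Sigma')"
  shows "\<exists>\<Gamma>. G_lattice b \<Gamma>"
proof -
  obtain k mn where kmn: "mn \<in> Sigma'" "b = h k mn" using assms by blast
  obtain m n where mn: "mn = (m, n)" by (cases mn) auto
  have inS: "(m,n) \<in> Sigma" and nex: "(m,n) \<notin> {(0,0),(1,1),(2,2)}" using kmn(1) mn Sigma'_def by auto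
  obtain c \<alpha>0 where a0: "Im \<alpha>0 \<noteq> 0" and f0: "\<And>x. fmn m n x = (x - of_real c) * (x - \<alpha>0) * (x - cnj \<alpha>0)"
    using inS unfolding Sigma_def by auto
  define \<alpha> where "\<alpha> = (if Im \<alpha>0 > 0 then \<alpha>0 else cnj \<alpha>0)"
  have ima: "Im \<alpha> > 0" unfolding \<alpha>_def using a0 by auto
  have f: "\<And>x. fmn m n x = (x - of_real c) * (x - \<alpha>) * (x - cnj \<alpha>)"
    unfolding \<alpha>_def using f0 by (simp add: mult_ac)
  have p: "\<alpha> * cnj \<alpha> = of_real ((cmod \<alpha>)^2)" by (rule complex_norm_square[symmetric])
  have "fmn m n 0 = - (of_real c * (\<alpha> * cnj \<alpha>))" using f[of 0] by simp
  then have "complex_of_real (c * (cmod \<alpha>)^2) = 1" unfolding p fmn_def by simp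
  then have ca: "c * (cmod \<alpha>)^2 = 1" by (metis of_real_eq_1_iff)
  have a0': "cmod \<alpha> > 0" using ima by auto
  have c0: "c > 0"
  proof (rule ccontr)
    assume "\<not> c > 0"
    then have "c * (cmod \<alpha>)^2 \<le> 0" by (simp add: mult_nonpos_nonneg)
    then show False using ca by simp
  qed
  have c1: "c \<noteq> 1"
  proof
    assume c1: "c = 1"
    have "fmn m n 1 = 0" using f c1 by simp
    then have mneq: "m = n" unfolding fmn_def by (simp add: algebra_simps)
    have s: "\<alpha> + cnj \<alpha> = of_real (2 * Re \<alpha>)" by (rule complex_add_cnj)
    have "fmn m n (-1) = -2 * ((1 + \<alpha>) * (1 + cnj \<alpha>))" using f[of "-1"] c1 by (simp add: algebra_simps)
    also have "(1 + \<alpha>) * (1 + cnj \<alpha>) = 1 + (\<alpha> + cnj \<alpha>) + \<alpha> * cnj \<alpha>" by (simp add: algebra_simps)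
    also have "\<dots> = of_real (2 + 2 * Re \<alpha>)" unfolding s p using ca c1 by simp
    finally have "complex_of_real (-2 - 2 * of_int m) = complex_of_real (-2 * (2 + 2 * Re \<alpha>))"
      unfolding fmn_def mneq by (simp add: algebra_simps)
    then have mre: "of_int m = 1 + 2 * Re \<alpha>" by (simp only: of_real_eq_iff) simp
    have "(Re \<alpha>)^2 + (Im \<alpha>)^2 = 1" using ca c1 by (simp add: cmod_power2)
    moreover have "(Im \<alpha>)^2 > 0" using ima by simp
    ultimately have "(Re \<alpha>)^2 < 1" by linarith
    then have "\<bar>Re \<alpha>\<bar> < 1" by (simp add: abs_square_less_1)
    then have "-1 < Re \<alpha>" "Re \<alpha> < 1" by auto
    then have "-1 < real_of_int m" "real_of_int m < 3" using mre by linarith+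
    then have "-1 < m \<and> m < 3" by linarith
    then have "m = 0 \<or> m = 1 \<or> m = 2" by linarith
    then show False using nex mneq by auto
  qed
  have croot: "c^3 = of_int m * c^2 - of_int n * c + 1"
  proof -
    have "fmn m n (of_real c) = 0" using f by simp
    then have "complex_of_real (c^3 - of_int m * c^2 + of_int n * c - 1) = 0" unfolding fmn_def by simp
    then show ?thesis by (simp only: of_real_eq_0_iff)
  qed
  have aroot: "\<alpha>^3 = of_int m * \<alpha>^2 - of_int n * \<alpha> + 1"
  proof -
    have "fmn m n \<alpha> = 0" using f by simp
    then show ?thesis unfolding fmn_def by (simp add: algebra_simps)
  qed
  define t0 where "t0 = ln c"
  have t0ne: "t0 \<noteq> 0" unfolding t0_def using c0 c1 by simp
  have ect: "exp t0 = c" unfolding t0_def using c0 by simp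
  have R: "real_root m n = c" "phi_mn m n = Arg \<alpha>" using roots[OF f ima] by auto
  have bb: "t0 * b = Arg \<alpha> + 2 * of_int k * pi"
    using kmn(2) mn R t0ne unfolding h_def t0_def by (simp add: field_simps)
  have Ea: "E b t0 = \<alpha>"
  proof -
    have "exp (\<i> * complex_of_real (t0 * b)) = exp (\<i> * complex_of_real (Arg \<alpha>))"
      unfolding exp_eq bb by (intro exI[of _ k]) (simp add: algebra_simps)
    moreover have "exp (complex_of_real (-t0/2)) = complex_of_real (cmod \<alpha>)"
    proof -
      have "(cmod \<alpha>)^2 = exp (-t0)" using ca ect c0 by (simp add: field_simps exp_minus)
      also have "\<dots> = (exp (-t0/2))^2" by (simp add: power2_eq_square flip: exp_add)
      finally have "cmod \<alpha> = exp (-t0/2)" by (simp add: power2_eq_iff_nonneg)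
      then show ?thesis by (simp only: exp_of_real)
    qed
    ultimately show ?thesis unfolding E_decomp using Arg_eq[of \<alpha>] a0' by simp
  qed
  interpret constr b c t0 \<alpha> m n
    by unfold_locales (use c0 c1 ima croot aroot t0_def Ea in auto)
  show ?thesis using Gam_lattice by blast
qed

theorem theorem3p9:
  fixes b :: real
  shows "((\<exists>\<Gamma>. G_lattice b \<Gamma>) \<longleftrightarrow> b \<in> (\<Union>k::int. h k ` Sigma'))
         \<and> countable (\<Union>k::int. h k ` Sigma')"
proof
  show "(\<exists>\<Gamma>. G_lattice b \<Gamma>) \<longleftrightarrow> b \<in> (\<Union>k::int. h k ` Sigma')"
    using dir1 dir2 by blast
  show "countable (\<Union>k::int. h k ` Sigma')"
    by (intro countable_UN countable_image) simp_all
qed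


end
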